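(* Let $\mathcal{S} \subseteq M_n$ be a quantum graph and $k\in\mathbb{N}$. Then $\mathcal{S}$ is $k$-connected if and only if the classical graph $C_v(\mathcal{S})$ is $k$-connected for every orthonormal basis $v=(|v_i\rangle)_{i=1}^n$ of $\mathbb{C}^n$.
   Context: A quantum graph on $M_n$ is a linear subspace $\mathcal{S}\subseteq M_n$ closed under adjoints and containing $I_n$. A quantum graph $\mathcal{T}\subseteq M_N$ is connected if $\mathcal{T}^m=M_N$ for some $m\in\mathbb{N}$ (powers are spans of products); otherwise disconnected. For a projection $P\in M_n$, $(I_n-P)\mathcal{S}(I_n-P)$ is regarded as a quantum graph in $(I_n-P)M_n(I_n-P)\cong M_{n-\operatorname{rank}(P)}$. A projection $P$ is a separator of $\mathcal{S}$ if $(I_n-P)\mathcal{S}(I_n-P)$ is either disconnected or $1$-dimensional; $\mathcal{S}$ is $k$-connected if every separator has rank at least $k$. For an ordered orthonormal basis $v$, $C_v(\mathcal{S})$ is the classical graph on $\{1,\dots,n\}$ with distinct $i,j$ adjacent exactly when $\langle v_i|A|v_j\rangle\neq 0$ for some $A\in\mathcal{S}$. A classical graph is $k$-connected if every set of vertices whose removal leaves a disconnected graph or a single vertex has at least $k$ elements. *)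

theory Defs
  imports "HOL-Analysis.Analysis"
begin

type_synonym 'n cmat = "complex^'n^'n"

definition mat_adj :: "'n::finite cmat \<Rightarrow> 'n cmat" where
  "mat_adj A = (\<chi> i j. cnj (A$j$i))"

definition cscale :: "complex \<Rightarrow> 'n::finite cmat \<Rightarrow> 'n cmat" where
  "cscale c A = (\<chi> i j. c * A$i$j)"

definition csubspace :: "'n::finite cmat set \<Rightarrow> bool" where
  "csubspace S \<longleftrightarrow> 0 \<in> S \<and> (\<forall>A\<in>S. \<forall>B\<in>S. A + B \<in> S) \<and> (\<forall>c. \<forall>A\<in>S. cscale c A \<in> S)"

definition cspan :: "'n::finite cmat set \<Rightarrow> 'n cmat set" where
  "cspan X = \<Inter>{T. csubspace T \<and> X \<subseteq> T}"

definition quantum_graph :: "'n::finite cmat set \<Rightarrow> bool" where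
  "quantum_graph S \<longleftrightarrow> csubspace S \<and> (\<forall>A\<in>S. mat_adj A \<in> S) \<and> mat 1 \<in> S"

definition set_prod :: "'n::finite cmat set \<Rightarrow> 'n cmat set \<Rightarrow> 'n cmat set" where
  "set_prod X Y = {A ** B | A B. A \<in> X \<and> B \<in> Y}"

text \<open>Powers of a subspace: T^1 = T, T^(m+1) = span of products of T^m and T.
  Only exponents m >= 1 are used.\<close>
fun qpow :: "'n::finite cmat set \<Rightarrow> nat \<Rightarrow> 'n cmat set" where
  "qpow T 0 = {0}"
| "qpow T (Suc 0) = T"
| "qpow T (Suc (Suc m)) = cspan (set_prod (qpow T (Suc m)) T)"

text \<open>The corner algebra Q M_n Q, identified with M_(rank Q).\<close>
definition corner :: "'n::finite cmat \<Rightarrow> 'n cmat set" where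
  "corner Q = {Q ** A ** Q | A. True}"

text \<open>Connectedness of a quantum graph T inside the corner Q M_n Q.\<close>
definition qconnected_in :: "'n::finite cmat \<Rightarrow> 'n cmat set \<Rightarrow> bool" where
  "qconnected_in Q T \<longleftrightarrow> (\<exists>m\<ge>1. qpow T m = corner Q)"

definition one_dim :: "'n::finite cmat set \<Rightarrow> bool" where
  "one_dim T \<longleftrightarrow> (\<exists>A. A \<noteq> 0 \<and> T = {cscale c A | c. True})"

definition is_projection :: "'n::finite cmat \<Rightarrow> bool" where
  "is_projection P \<longleftrightarrow> P ** P = P \<and> mat_adj P = P"

definition compression :: "'n::finite cmat \<Rightarrow> 'n cmat set \<Rightarrow> 'n cmat set" where
  "compression P S = {(mat 1 - P) ** A ** (mat 1 - P) | A. A \<in> S}"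

definition q_separator :: "'n::finite cmat set \<Rightarrow> 'n cmat \<Rightarrow> bool" where
  "q_separator S P \<longleftrightarrow> is_projection P \<and>
     (\<not> qconnected_in (mat 1 - P) (compression P S) \<or> one_dim (compression P S))"

definition q_k_connected :: "'n::finite cmat set \<Rightarrow> nat \<Rightarrow> bool" where
  "q_k_connected S k \<longleftrightarrow> (\<forall>P. q_separator S P \<longrightarrow> rank P \<ge> k)"

definition cinner :: "complex^'n::finite \<Rightarrow> complex^'n \<Rightarrow> complex" where
  "cinner x y = (\<Sum>i\<in>UNIV. cnj (x$i) * y$i)"

definition orthonormal_basis :: "('n::finite \<Rightarrow> complex^'n) \<Rightarrow> bool" where
  "orthonormal_basis v \<longleftrightarrow> (\<forall>i j. cinner (v i) (v j) = (if i = j then 1 else 0))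
     \<and> vec.span (range v) = UNIV"

text \<open>Classical graph C_v(S) on vertex type 'n.\<close>
definition Cv :: "('n::finite \<Rightarrow> complex^'n) \<Rightarrow> 'n cmat set \<Rightarrow> 'n \<Rightarrow> 'n \<Rightarrow> bool" where
  "Cv v S i j \<longleftrightarrow> i \<noteq> j \<and> (\<exists>A\<in>S. cinner (v i) (A *v v j) \<noteq> 0)"

definition graph_connected_on :: "('a \<Rightarrow> 'a \<Rightarrow> bool) \<Rightarrow> 'a set \<Rightarrow> bool" where
  "graph_connected_on E V \<longleftrightarrow>
     (\<forall>x\<in>V. \<forall>y\<in>V. (x, y) \<in> {(a, b). a \<in> V \<and> b \<in> V \<and> E a b}\<^sup>*)"

definition c_separator :: "('a::finite \<Rightarrow> 'a \<Rightarrow> bool) \<Rightarrow> 'a set \<Rightarrow> bool" where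
  "c_separator E X \<longleftrightarrow> \<not> graph_connected_on E (UNIV - X) \<or> card (UNIV - X) = 1"

definition c_k_connected :: "('a::finite \<Rightarrow> 'a \<Rightarrow> bool) \<Rightarrow> nat \<Rightarrow> bool" where
  "c_k_connected E k \<longleftrightarrow> (\<forall>X. c_separator E X \<longrightarrow> card X \<ge> k)"

end

theory Submission
  imports Defs "HOL-Computational_Algebra.Fundamental_Theorem_Algebra"
begin



definition outer :: "complex^'n::finite \<Rightarrow> complex^'n \<Rightarrow> 'n cmat" where
  "outer u w = (\<chi> i j. u$i * cnj (w$j))"

lemma mm_add_r: "((A::'n::finite cmat) + B) ** (C::'n cmat) = A ** C + B ** C"
  by (simp add: matrix_matrix_mult_def vec_eq_iff algebra_simps sum.distrib)
lemma mm_diff_r: "((A::'n::finite cmat) - B) ** C = A ** C - B ** C"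
  by (simp add: matrix_matrix_mult_def vec_eq_iff algebra_simps sum_subtractf)
lemma mm_diff_l: "(A::'n::finite cmat) ** (B - C) = A ** B - A ** C"
  by (simp add: matrix_matrix_mult_def vec_eq_iff algebra_simps sum_subtractf)
lemma mm_sum_l: "(A::'n::finite cmat) ** sum f I = (\<Sum>i\<in>I. A ** f i)"
  by (induct I rule: infinite_finite_induct) (auto simp: matrix_add_ldistrib)
lemma mm_sum_r: "sum (f::_\<Rightarrow>'n::finite cmat) I ** (A::'n::finite cmat) = (\<Sum>i\<in>I. f i ** A)"
  by (induct I rule: infinite_finite_induct) (auto simp: mm_add_r)
lemma mv_sum_l: "sum f I *v (x::complex^'n::finite) = (\<Sum>i\<in>I. f i *v x)"
  by (induct I rule: infinite_finite_induct) (auto simp: matrix_vector_mult_add_rdistrib)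

lemma cinner_add_right: "cinner x (y + z) = cinner x y + cinner x z"
  by (simp add: cinner_def algebra_simps sum.distrib)
lemma cinner_add_left: "cinner (x + y) z = cinner x z + cinner y z"
  by (simp add: cinner_def algebra_simps sum.distrib)
lemma cinner_diff_right: "cinner x (y - z) = cinner x y - cinner x z"
  by (simp add: cinner_def algebra_simps sum_subtractf)
lemma cinner_diff_left: "cinner (x - y) z = cinner x z - cinner y z"
  by (simp add: cinner_def algebra_simps sum_subtractf)
lemma cinner_scale_right: "cinner x (c *s y) = c * cinner x y"
  by (simp add: cinner_def sum_distrib_left algebra_simps)
lemma cinner_scale_left: "cinner (c *s x) y = cnj c * cinner x y"
  by (simp add: cinner_def sum_distrib_left algebra_simps)
lemma cinner_zero_left [simp]: "cinner 0 x = 0"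
  by (simp add: cinner_def)
lemma cinner_zero_right [simp]: "cinner x 0 = 0"
  by (simp add: cinner_def)
lemma cinner_sum_right: "cinner x (sum f I) = (\<Sum>i\<in>I. cinner x (f i))"
  by (induct I rule: infinite_finite_induct) (auto simp: cinner_add_right)
lemma cinner_sum_left: "cinner (sum f I) x = (\<Sum>i\<in>I. cinner (f i) x)"
  by (induct I rule: infinite_finite_induct) (auto simp: cinner_add_left)
lemma cinner_commute: "cinner y x = cnj (cinner x y)"
  by (simp add: cinner_def mult.commute)
lemma cnj_mult_self_real: "cnj z * z = complex_of_real ((cmod z)^2)"
  by (simp add: complex_norm_square[symmetric] mult.commute)
lemma cinner_self_real: "cinner x x = of_real (\<Sum>i\<in>UNIV. (cmod (x$i))^2)"
  unfolding cinner_def of_real_sum by (rule sum.cong) (auto simp: cnj_mult_self_real simp del: of_real_power)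
lemma cinner_self_eq_0 [simp]: "cinner x x = 0 \<longleftrightarrow> x = 0"
proof -
  have "cinner x x = 0 \<longleftrightarrow> (\<Sum>i\<in>UNIV. (cmod (x$i))^2) = 0"
    unfolding cinner_self_real of_real_eq_0_iff ..
  also have "\<dots> \<longleftrightarrow> (\<forall>i. (cmod (x$i))^2 = 0)"
    by (subst sum_nonneg_eq_0_iff) auto
  also have "\<dots> \<longleftrightarrow> x = 0" by (simp add: vec_eq_iff)
  finally show ?thesis .
qed

lemma cinner_adj: "cinner x (A *v y) = cinner (mat_adj A *v x) y"
  unfolding cinner_def mat_adj_def matrix_vector_mult_def
  by (simp add: sum_distrib_left sum_distrib_right mult.assoc mult.left_commute)
     (rule sum.swap)

lemma outer_mult_vec: "outer u w *v x = cinner w x *s u"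
  by (simp add: outer_def matrix_vector_mult_def cinner_def vec_eq_iff sum_distrib_left
      sum_distrib_right mult_ac)
lemma mat_mult_outer: "A ** outer u w = outer (A *v u) w"
  by (simp add: outer_def matrix_vector_mult_def matrix_matrix_mult_def vec_eq_iff
      sum_distrib_right sum_distrib_left mult_ac)
lemma outer_mult_mat: "outer u w ** A = outer u (mat_adj A *v w)"
  by (simp add: outer_def matrix_vector_mult_def matrix_matrix_mult_def vec_eq_iff mat_adj_def
      sum_distrib_left mult_ac)
lemma adj_outer: "mat_adj (outer u w) = outer w u"
  by (simp add: outer_def mat_adj_def vec_eq_iff)
lemma adj_mult: "mat_adj (A ** B) = mat_adj B ** mat_adj (A::'n::finite cmat)"
  by (simp add: mat_adj_def matrix_matrix_mult_def vec_eq_iff mult.commute)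
lemma adj_adj [simp]: "mat_adj (mat_adj A) = A"
  by (simp add: mat_adj_def vec_eq_iff)
lemma adj_add: "mat_adj (A + B) = mat_adj A + mat_adj B"
  by (simp add: mat_adj_def vec_eq_iff)
lemma adj_diff: "mat_adj (A - B) = mat_adj A - mat_adj B"
  by (simp add: mat_adj_def vec_eq_iff)
lemma adj_zero [simp]: "mat_adj 0 = 0"
  by (simp add: mat_adj_def vec_eq_iff)
lemma adj_one [simp]: "mat_adj (mat 1) = mat 1"
  by (simp add: mat_adj_def vec_eq_iff mat_def)
lemma adj_cscale: "mat_adj (cscale c A) = cscale (cnj c) (mat_adj A)"
  by (simp add: mat_adj_def cscale_def vec_eq_iff)
lemma adj_sum: "mat_adj (sum f I) = (\<Sum>i\<in>I. mat_adj (f i))"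
  by (induct I rule: infinite_finite_induct) (auto simp: adj_add)
lemma adj_inj: "mat_adj A = mat_adj B \<longleftrightarrow> A = B"
  by (metis adj_adj)
lemma adj_eq_0 [simp]: "mat_adj A = 0 \<longleftrightarrow> A = 0"
  by (metis adj_adj adj_zero)

lemma cscale_mult_l: "cscale c A ** B = cscale c (A ** B)"
  by (simp add: cscale_def matrix_matrix_mult_def vec_eq_iff sum_distrib_left mult_ac)
lemma cscale_mult_r: "A ** cscale c B = cscale c (A ** B)"
  by (simp add: cscale_def matrix_matrix_mult_def vec_eq_iff sum_distrib_left mult_ac)
lemma cscale_mv: "cscale c A *v x = c *s (A *v x)"
  by (simp add: cscale_def matrix_vector_mult_def vec_eq_iff sum_distrib_left mult_ac)
lemma cscale_one [simp]: "cscale 1 A = A"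
  by (simp add: cscale_def vec_eq_iff)
lemma cscale_zero [simp]: "cscale 0 A = 0"
  by (simp add: cscale_def vec_eq_iff)
lemma cscale_zero_r [simp]: "cscale c 0 = 0"
  by (simp add: cscale_def vec_eq_iff)
lemma cscale_cscale: "cscale c (cscale d A) = cscale (c * d) A"
  by (simp add: cscale_def vec_eq_iff)
lemma cscale_minus1: "cscale (-1) A = - A"
  by (simp add: cscale_def vec_eq_iff)
lemma cscale_add: "cscale c (A + B) = cscale c A + cscale c B"
  by (simp add: cscale_def vec_eq_iff algebra_simps)
lemma cscale_eq_0: "cscale c A = 0 \<longleftrightarrow> c = 0 \<or> A = 0"
  by (auto simp: cscale_def vec_eq_iff)
lemma cscale_outer: "cscale c (outer u w) = outer (c *s u) w"
  by (simp add: cscale_def outer_def vec_eq_iff)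
lemma outer_scale_l: "outer (c *s u) w = cscale c (outer u w)"
  by (simp add: cscale_def outer_def vec_eq_iff)
lemma outer_outer: "outer u w ** outer x y = cscale (cinner w x) (outer u y)"
  by (simp add: mat_mult_outer outer_mult_vec outer_scale_l)
lemma outer_eq_0: "outer u w = 0 \<longleftrightarrow> u = 0 \<or> w = 0"
  by (auto simp: outer_def vec_eq_iff)
lemma outer_add_l: "outer (u + v) w = outer u w + outer v w"
  by (simp add: outer_def vec_eq_iff algebra_simps)

lemma mat_entry_cinner: "(A::'n::finite cmat) $ i $ j = cinner (axis i 1) (A *v axis j 1)"
  by (simp add: cinner_def matrix_vector_mult_def axis_def if_distrib if_distribR
     cong: if_cong)




lemma csub_0: "csubspace S \<Longrightarrow> 0 \<in> S" by (simp add: csubspace_def)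
lemma csub_add: "csubspace S \<Longrightarrow> A \<in> S \<Longrightarrow> B \<in> S \<Longrightarrow> A + B \<in> S" by (simp add: csubspace_def)
lemma csub_scale: "csubspace S \<Longrightarrow> A \<in> S \<Longrightarrow> cscale c A \<in> S" by (simp add: csubspace_def)
lemma csub_neg: "csubspace S \<Longrightarrow> A \<in> S \<Longrightarrow> - A \<in> S"
  using csub_scale[of S A "-1"] by (simp add: cscale_minus1)
lemma csub_diff: "csubspace S \<Longrightarrow> A \<in> S \<Longrightarrow> B \<in> S \<Longrightarrow> A - B \<in> S"
  unfolding diff_conv_add_uminus by (intro csub_add csub_neg)
lemma csub_sum: "csubspace S \<Longrightarrow> (\<And>i. i \<in> I \<Longrightarrow> f i \<in> S) \<Longrightarrow> sum f I \<in> S"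
  by (induct I rule: infinite_finite_induct) (auto simp: csub_0 csub_add)

lemma cspan_csub: "csubspace (cspan X)"
  unfolding cspan_def csubspace_def by auto
lemma cspan_sup: "X \<subseteq> cspan X"
  unfolding cspan_def by auto
lemma cspan_min: "csubspace T \<Longrightarrow> X \<subseteq> T \<Longrightarrow> cspan X \<subseteq> T"
  unfolding cspan_def by auto
lemma cspan_eq: "csubspace X \<Longrightarrow> cspan X = X"
  using cspan_min cspan_sup by blast

lemma csub_UNIV: "csubspace UNIV" by (simp add: csubspace_def)

lemma scaleR_cmat: "r *\<^sub>R (A::'n::finite cmat) = cscale (of_real r) A"
proof -
  have "(r *\<^sub>R A) $ i $ j = of_real r * A $ i $ j" for i j
  proof -
    have "(r *\<^sub>R A) $ i $ j = r *\<^sub>R (A $ i $ j)" by simp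
    also have "\<dots> = of_real r * A $ i $ j" by (rule scaleR_conv_of_real)
    finally show ?thesis .
  qed
  then show ?thesis unfolding cscale_def vec_eq_iff by simp
qed

lemma csub_real: "csubspace S \<Longrightarrow> subspace S"
  unfolding subspace_def by (auto simp: csub_0 csub_add scaleR_cmat csub_scale)

lemma csub_left_mult: "csubspace S \<Longrightarrow> csubspace {Y. X ** Y \<in> S}"
  unfolding csubspace_def by (auto simp: matrix_add_ldistrib cscale_mult_r)
lemma csub_right_mult: "csubspace S \<Longrightarrow> csubspace {Y. (Y::'n::finite cmat) ** X \<in> S}"
  unfolding csubspace_def by (auto simp: mm_add_r cscale_mult_l)
lemma csub_adj: "csubspace S \<Longrightarrow> csubspace {Y. mat_adj Y \<in> S}"
  unfolding csubspace_def by (auto simp: adj_add adj_cscale)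

text \<open>Stabilization of increasing chains of subspaces.\<close>
lemma chain_stab:
  fixes f :: "nat \<Rightarrow> 'a::euclidean_space set"
  assumes sub: "\<And>m. m \<ge> 1 \<Longrightarrow> subspace (f m)"
    and mono: "\<And>m. m \<ge> 1 \<Longrightarrow> f m \<subseteq> f (Suc m)"
  shows "\<exists>M\<ge>1. f M = f (Suc M)"
proof (rule ccontr)
  assume "\<not> ?thesis"
  then have ne: "\<And>m. m \<ge> 1 \<Longrightarrow> f m \<subset> f (Suc m)" using mono by blast
  have "dim (f (Suc m)) \<ge> m" for m
  proof (induct m)
    case 0 then show ?case by simp
  next
    case (Suc m)
    have "span (f (Suc m)) \<subset> span (f (Suc (Suc m)))"
    proof -
      have e1: "span (f (Suc m)) = f (Suc m)" using sub[of "Suc m"] by simp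
      have e2: "span (f (Suc (Suc m))) = f (Suc (Suc m))" using sub[of "Suc (Suc m)"] by simp
      show ?thesis unfolding e1 e2 by (rule ne) simp
    qed
    then have "dim (f (Suc m)) < dim (f (Suc (Suc m)))" by (rule dim_psubset)
    with Suc show ?case by simp
  qed
  then have "dim (f (Suc (DIM('a) + 1))) \<ge> DIM('a) + 1" by blast
  moreover have "dim (f (Suc (DIM('a) + 1))) \<le> DIM('a)" by (rule dim_subset_UNIV)
  ultimately show False by simp
qed

text \<open>Corners.\<close>
lemma corner_iff:
  assumes "Q ** Q = Q"
  shows "M \<in> corner Q \<longleftrightarrow> Q ** M = M \<and> M ** Q = M"
proof
  assume "M \<in> corner Q"
  then obtain A where "M = Q ** A ** Q" by (auto simp: corner_def)
  moreover have "Q ** ((Q ** A) ** Q) = (Q ** Q) ** A ** Q" by (simp add: matrix_mul_assoc)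
  moreover have "((Q ** A) ** Q) ** Q = (Q ** A) ** (Q ** Q)" by (simp add: matrix_mul_assoc)
  ultimately show "Q ** M = M \<and> M ** Q = M" using assms by simp
next
  assume "Q ** M = M \<and> M ** Q = M"
  then have "M = Q ** M ** Q" by simp
  then show "M \<in> corner Q" unfolding corner_def by blast
qed

lemma csub_corner: "csubspace (corner Q)"
  unfolding csubspace_def corner_def
proof (intro conjI allI ballI)
  show "0 \<in> {Q ** A ** Q |A. True}" by (rule CollectI, rule exI[of _ 0]) simp
  fix A B assume "A \<in> {Q ** A ** Q |A. True}" "B \<in> {Q ** A ** Q |A. True}"
  then obtain A' B' where "A = Q ** A' ** Q" "B = Q ** B' ** Q" by auto
  then have "A + B = Q ** (A' + B') ** Q" by (simp add: matrix_add_ldistrib mm_add_r)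
  then show "A + B \<in> {Q ** A ** Q |A. True}" by blast
next
  fix c A assume "A \<in> {Q ** A ** Q |A. True}"
  then obtain A' where "A = Q ** A' ** Q" by auto
  then have "cscale c A = Q ** (cscale c A') ** Q" by (simp add: cscale_mult_l cscale_mult_r)
  then show "cscale c A \<in> {Q ** A ** Q |A. True}" by blast
qed

lemma corner_mult: "Q ** Q = Q \<Longrightarrow> M \<in> corner Q \<Longrightarrow> N \<in> corner Q \<Longrightarrow> M ** N \<in> corner Q"
proof -
  assume Q: "Q ** Q = Q" and M: "M \<in> corner Q" and N: "N \<in> corner Q"
  have "Q ** (M ** N) = (Q ** M) ** N" "(M ** N) ** Q = M ** (N ** Q)" by (simp_all add: matrix_mul_assoc)
  then show ?thesis using M N by (simp add: corner_iff[OF Q])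
qed



text \<open>Powers.\<close>
locale qsetting =
  fixes T :: "'n::finite cmat set" and Q0 :: "'n cmat"
  assumes sub: "csubspace T" and adjc: "\<And>A. A \<in> T \<Longrightarrow> mat_adj A \<in> T"
    and Q0T: "Q0 \<in> T" and Tc: "T \<subseteq> corner Q0" and Q0p: "is_projection Q0"
begin

lemma Q0i: "Q0 ** Q0 = Q0" using Q0p by (simp add: is_projection_def)
lemma Q0a: "mat_adj Q0 = Q0" using Q0p by (simp add: is_projection_def)

lemma qpow_Suc: "m \<ge> 1 \<Longrightarrow> qpow T (Suc m) = cspan (set_prod (qpow T m) T)"
  by (cases m) auto

lemma qpow_sub: "csubspace (qpow T m)" if "m \<ge> 1"
proof (cases m)
  case (Suc k) then show ?thesis by (cases k) (auto simp: sub cspan_csub)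
qed (use that in simp)

lemma qpow_corner: "m \<ge> 1 \<Longrightarrow> qpow T m \<subseteq> corner Q0"
proof (induct m)
  case 0 then show ?case by simp
next
  case (Suc m)
  show ?case
  proof (cases "m = 0")
    case True then show ?thesis using Tc by simp
  next
    case False
    then have "m \<ge> 1" by simp
    have "set_prod (qpow T m) T \<subseteq> corner Q0"
      using Suc(1)[OF \<open>m \<ge> 1\<close>] Tc by (auto simp: set_prod_def intro!: corner_mult[OF Q0i])
    then show ?thesis using qpow_Suc[OF \<open>m \<ge> 1\<close>] cspan_min[OF csub_corner] by simp
  qed
qed

lemma qpow_mono: "m \<ge> 1 \<Longrightarrow> qpow T m \<subseteq> qpow T (Suc m)"
proof
  fix M assume m: "m \<ge> 1" and M: "M \<in> qpow T m"
  then have "M = M ** Q0" using qpow_corner[OF m] corner_iff[OF Q0i] by auto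
  then have "M \<in> set_prod (qpow T m) T" using M Q0T unfolding set_prod_def by blast
  then show "M \<in> qpow T (Suc m)" using qpow_Suc[OF m] cspan_sup by blast
qed

lemma qpow_prod: "a \<ge> 1 \<Longrightarrow> b \<ge> 1 \<Longrightarrow> X \<in> qpow T a \<Longrightarrow> Y \<in> qpow T b \<Longrightarrow> X ** Y \<in> qpow T (a + b)"
proof (induct b arbitrary: Y)
  case 0 then show ?case by simp
next
  case (Suc b)
  show ?case
  proof (cases "b = 0")
    case True
    then have "X ** Y \<in> set_prod (qpow T a) T" using Suc by (auto simp: set_prod_def)
    then show ?thesis using True qpow_Suc[OF \<open>a \<ge> 1\<close>] cspan_sup by fastforce
  next
    case False
    then have b1: "b \<ge> 1" by simp
    have "set_prod (qpow T b) T \<subseteq> {Y. X ** Y \<in> qpow T (a + Suc b)}"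
    proof
      fix Z assume "Z \<in> set_prod (qpow T b) T"
      then obtain W t where Z: "Z = W ** t" "W \<in> qpow T b" "t \<in> T" by (auto simp: set_prod_def)
      have "X ** W \<in> qpow T (a + b)" using Suc(1)[OF Suc(2) b1 Suc(4) Z(2)] .
      then have "(X ** W) ** t \<in> set_prod (qpow T (a + b)) T" using Z by (auto simp: set_prod_def)
      then have "(X ** W) ** t \<in> qpow T (a + Suc b)"
        using qpow_Suc[of "a + b"] \<open>a \<ge> 1\<close> cspan_sup by fastforce
      then show "Z \<in> {Y. X ** Y \<in> qpow T (a + Suc b)}" using Z by (simp add: matrix_mul_assoc)
    qed
    moreover have "csubspace {Y. X ** Y \<in> qpow T (a + Suc b)}"
      by (rule csub_left_mult[OF qpow_sub]) (use \<open>a \<ge> 1\<close> in simp)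
    ultimately have "cspan (set_prod (qpow T b) T) \<subseteq> {Y. X ** Y \<in> qpow T (a + Suc b)}"
      using cspan_min by blast
    then show ?thesis using Suc(5) qpow_Suc[OF b1] by auto
  qed
qed

lemma qpow_adj: "m \<ge> 1 \<Longrightarrow> X \<in> qpow T m \<Longrightarrow> mat_adj X \<in> qpow T m"
proof (induct m arbitrary: X)
  case 0 then show ?case by simp
next
  case (Suc m)
  show ?case
  proof (cases "m = 0")
    case True then show ?thesis using Suc adjc by simp
  next
    case False
    then have m1: "m \<ge> 1" by simp
    have "set_prod (qpow T m) T \<subseteq> {Y. mat_adj Y \<in> qpow T (Suc m)}"
    proof
      fix Z assume "Z \<in> set_prod (qpow T m) T"
      then obtain W t where Z: "Z = W ** t" "W \<in> qpow T m" "t \<in> T" by (auto simp: set_prod_def)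
      have "mat_adj t ** mat_adj W \<in> qpow T (1 + m)"
        by (rule qpow_prod) (use Z adjc Suc(1)[OF m1] m1 in auto)
      then show "Z \<in> {Y. mat_adj Y \<in> qpow T (Suc m)}" using Z by (simp add: adj_mult)
    qed
    moreover have "csubspace {Y. mat_adj Y \<in> qpow T (Suc m)}"
      by (rule csub_adj[OF qpow_sub]) simp
    ultimately have "cspan (set_prod (qpow T m) T) \<subseteq> {Y. mat_adj Y \<in> qpow T (Suc m)}"
      using cspan_min by blast
    then show ?thesis using Suc(3) qpow_Suc[OF m1] by auto
  qed
qed

lemma stab: "\<exists>M\<ge>1. csubspace (qpow T M) \<and> Q0 \<in> qpow T M \<and> qpow T M \<subseteq> corner Q0 \<and>
   T \<subseteq> qpow T M \<and>
   (\<forall>X\<in>qpow T M. \<forall>Y\<in>qpow T M. X ** Y \<in> qpow T M) \<and> (\<forall>X\<in>qpow T M. mat_adj X \<in> qpow T M)"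
proof -
  have "\<exists>M\<ge>1. qpow T M = qpow T (Suc M)"
    by (rule chain_stab[of "qpow T"]) (auto intro!: csub_real qpow_sub qpow_mono)
  then obtain M where M: "M \<ge> 1" "qpow T M = qpow T (Suc M)" by blast
  have eq: "qpow T (M + j) = qpow T M" for j
  proof (induct j)
    case 0 then show ?case by simp
  next
    case (Suc j)
    have "qpow T (M + Suc j) = cspan (set_prod (qpow T (M + j)) T)"
      using qpow_Suc[of "M + j"] M(1) by simp
    also have "\<dots> = cspan (set_prod (qpow T M) T)" using Suc by simp
    also have "\<dots> = qpow T M" using M qpow_Suc[OF M(1)] by simp
    finally show ?case .
  qed
  have Tsub: "T \<subseteq> qpow T m" if "m \<ge> 1" for m
    using that
  proof (induct m)
    case 0 then show ?case by simp
  next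
    case (Suc m)
    show ?case
    proof (cases "m = 0")
      case False
      then have "T \<subseteq> qpow T m" "qpow T m \<subseteq> qpow T (Suc m)" using Suc(1) qpow_mono by auto
      then show ?thesis by (rule order_trans)
    qed simp
  qed
  show ?thesis
  proof (intro exI[of _ M] conjI ballI)
    show "M \<ge> 1" using M by simp
    show "csubspace (qpow T M)" using qpow_sub M by simp
    show "Q0 \<in> qpow T M" using Tsub[OF M(1)] Q0T by auto
    show "qpow T M \<subseteq> corner Q0" using qpow_corner M by simp
    show "T \<subseteq> qpow T M" using Tsub M by simp
    show "X ** Y \<in> qpow T M" if "X \<in> qpow T M" "Y \<in> qpow T M" for X Y
      using qpow_prod[OF M(1) M(1) that] eq[of M] by simp
    show "mat_adj X \<in> qpow T M" if "X \<in> qpow T M" for X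
      using qpow_adj M that by simp
  qed
qed

end




definition ortho :: "(complex^'n::finite) set \<Rightarrow> bool" where
  "ortho B \<longleftrightarrow> (\<forall>x\<in>B. \<forall>y\<in>B. cinner x y = (if x = y then 1 else 0))"

lemma cinner_orth_sum:
  assumes "finite B" "ortho B" "w \<in> B"
  shows "cinner w (\<Sum>v\<in>B. u v *s v) = u w"
proof -
  have "cinner w (\<Sum>v\<in>B. u v *s v) = (\<Sum>v\<in>B. u v * (if w = v then 1 else 0))"
    using assms by (simp add: cinner_sum_right cinner_scale_right ortho_def)
  also have "\<dots> = u w" using assms by (simp add: if_distrib if_distribR cong: if_cong)
  finally show ?thesis .
qed

lemma ortho_indep: assumes "finite B" "ortho B" shows "vec.independent B"
proof
  assume "vec.dependent B"
  then obtain u where u: "\<exists>v\<in>B. u v \<noteq> 0" "(\<Sum>v\<in>B. u v *s v) = 0"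
    using vec.dependent_finite[OF assms(1)] by blast
  then obtain w where "w \<in> B" "u w \<noteq> 0" by blast
  with cinner_orth_sum[OF assms this(1), of u] u(2) show False by simp
qed

lemma ortho_ne0: "ortho B \<Longrightarrow> x \<in> B \<Longrightarrow> x \<noteq> 0"
proof
  assume "ortho B" "x \<in> B" "x = 0"
  then have "cinner x x = (if x = x then 1 else 0)" unfolding ortho_def by blast
  with \<open>x = 0\<close> show False by simp
qed

lemma gs: "vec.subspace W \<Longrightarrow> \<exists>B. finite B \<and> B \<subseteq> W \<and> ortho B \<and> vec.span B = W"
proof (induct "vec.dim W" arbitrary: W rule: less_induct)
  case less
  show ?case
  proof (cases "W \<subseteq> {0}")
    case True
    then have "W = {0}" using less(2) vec.subspace_0 by blast
    then show ?thesis by (intro exI[of _ "{}"]) (auto simp: ortho_def)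
  next
    case False
    then obtain w where w: "w \<in> W" "w \<noteq> 0" by blast
    define r where "r = (\<Sum>i\<in>UNIV. (cmod (w$i))^2)"
    have wr: "cinner w w = of_real r" unfolding r_def by (rule cinner_self_real)
    have "r \<noteq> 0" using w wr by (metis cinner_self_eq_0 of_real_0)
    moreover have "r \<ge> 0" unfolding r_def by (simp add: sum_nonneg)
    ultimately have r: "r > 0" by simp
    define w' where "w' = complex_of_real (1 / sqrt r) *s w"
    have w'1: "cinner w' w' = 1"
    proof -
      define t where "t = 1 / sqrt r"
      have "cinner w' w' = cnj (complex_of_real t) * (complex_of_real t * complex_of_real r)"
        unfolding w'_def t_def[symmetric] cinner_scale_left cinner_scale_right wr by (simp only: mult_ac)
      also have "\<dots> = complex_of_real (t * (t * r))" by simp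
      also have "t * (t * r) = 1" using r unfolding t_def
        by (simp add: field_simps flip: power2_eq_square)
      finally show ?thesis by simp
    qed
    have w'W: "w' \<in> W" unfolding w'_def using less(2) w(1) by (rule vec.subspace_scale)
    define W' where "W' = {x\<in>W. cinner w' x = 0}"
    have subW': "vec.subspace W'"
      using less(2) unfolding W'_def vec.subspace_def
      by (auto simp: cinner_add_right cinner_scale_right)
    have "w' \<notin> W'" using w'1 by (simp add: W'_def)
    then have "W' \<subset> W" using w'W unfolding W'_def by blast
    moreover have e1: "vec.span W' = W'" using subW' by (rule vec.span_eq_iff[THEN iffD2])
    moreover have e2: "vec.span W = W" using less(2) by (rule vec.span_eq_iff[THEN iffD2])
    ultimately have "vec.span W' \<subset> vec.span W" unfolding e1 e2 by blast
    then have "vec.dim W' < vec.dim W" by (rule vec.dim_psubset)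
    from less(1)[OF this subW'] obtain B' where B': "finite B'" "B' \<subseteq> W'" "ortho B'" "vec.span B' = W'"
      by blast
    have w'nB: "w' \<notin> B'" using B'(2) w'1 by (auto simp: W'_def)
    define B where "B = insert w' B'"
    have "ortho B"
      unfolding ortho_def B_def
    proof (intro ballI)
      fix x y assume x: "x \<in> insert w' B'" and y: "y \<in> insert w' B'"
      have orth1: "cinner w' b = 0" if "b \<in> B'" for b using that B'(2) by (auto simp: W'_def)
      have orth2: "cinner b w' = 0" if "b \<in> B'" for b using orth1[OF that] by (subst cinner_commute) simp
      show "cinner x y = (if x = y then 1 else 0)"
        using x y B'(3) w'1 orth1 orth2 w'nB unfolding ortho_def by auto
    qed
    moreover have "vec.span B = W"
    proof
      show "vec.span B \<subseteq> W"
        using B'(2) w'W less(2) unfolding B_def W'_def by (intro vec.span_minimal) auto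
      show "W \<subseteq> vec.span B"
      proof
        fix x assume x: "x \<in> W"
        define y where "y = x - cinner w' x *s w'"
        have "y \<in> W'" unfolding W'_def y_def
          using x w'W less(2) w'1 by (auto simp: cinner_diff_right cinner_scale_right
              intro!: vec.subspace_diff vec.subspace_scale)
        then have "y \<in> vec.span B" using B'(4) vec.span_mono[of B' B] by (auto simp: B_def)
        moreover have "cinner w' x *s w' \<in> vec.span B"
          by (intro vec.span_scale vec.span_base) (simp add: B_def)
        ultimately have "y + cinner w' x *s w' \<in> vec.span B" by (rule vec.span_add)
        then show "x \<in> vec.span B" by (simp add: y_def)
      qed
    qed
    moreover have "finite B" "B \<subseteq> W" using B' w'W by (auto simp: B_def W'_def)
    ultimately show ?thesis by blast
  qed
qed

definition pr :: "(complex^'n::finite) set \<Rightarrow> 'n cmat" where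
  "pr B = (\<Sum>b\<in>B. outer b b)"

lemma outer_zero_left [simp]: "outer 0 w = 0" by (simp add: outer_eq_0)
lemma outer_zero_right [simp]: "outer u 0 = 0" by (simp add: outer_eq_0)

lemma pr_apply: "pr B *v x = (\<Sum>b\<in>B. cinner b x *s b)"
  by (simp add: pr_def mv_sum_l outer_mult_vec)

lemma pr_fix: assumes "finite B" "ortho B" "x \<in> vec.span B" shows "pr B *v x = x"
proof -
  have "(pr B - mat 1) *v x = 0"
  proof (rule vec.linear_eq_0_on_span[OF matrix_vector_mul_linear_gen _ assms(3)])
    fix b assume b: "b \<in> B"
    have "pr B *v b = (\<Sum>b'\<in>B. (if b' = b then 1 else 0) *s b')"
      unfolding pr_apply using assms(2) b by (intro sum.cong) (auto simp: ortho_def)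
    also have "\<dots> = b" using b assms(1) by (simp add: if_distrib if_distribR cong: if_cong)
    finally show "(pr B - mat 1) *v b = 0" by (simp add: matrix_vector_mult_diff_rdistrib)
  qed
  then show ?thesis by (simp add: matrix_vector_mult_diff_rdistrib)
qed

lemma pr_range: "pr B *v x \<in> vec.span B"
  unfolding pr_apply by (intro vec.span_sum vec.span_scale vec.span_base)

lemma pr_adj: "mat_adj (pr B) = pr B"
  by (simp add: pr_def adj_sum adj_outer)

lemma pr_idem: assumes "finite B" "ortho B" shows "pr B ** pr B = pr B"
  unfolding matrix_eq
  by (simp add: matrix_vector_mul_assoc[symmetric] pr_fix[OF assms pr_range])

lemma pr_proj: "finite B \<Longrightarrow> ortho B \<Longrightarrow> is_projection (pr B)"
  by (simp add: is_projection_def pr_idem pr_adj)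

lemma orthonormal_inj: "orthonormal_basis v \<Longrightarrow> inj v"
proof (rule injI)
  fix x y assume o: "orthonormal_basis v" and e: "v x = v y"
  show "x = y"
  proof (rule ccontr)
    assume "x \<noteq> y"
    have "cinner (v x) (v y) = (if x = y then 1 else 0)" "cinner (v y) (v y) = (if y = y then 1 else 0)"
      using o unfolding orthonormal_basis_def by blast+
    with e \<open>x \<noteq> y\<close> show False by simp
  qed
qed

lemma orthonormal_ortho: "orthonormal_basis v \<Longrightarrow> ortho (range v)"
  using orthonormal_inj[of v] unfolding orthonormal_basis_def ortho_def by (auto simp: inj_eq)

lemma onb_sum: assumes "orthonormal_basis v" shows "(\<Sum>i\<in>UNIV. outer (v i) (v i)) = mat 1"
proof -
  have "(\<Sum>i\<in>UNIV. outer (v i) (v i)) = pr (range v)"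
    unfolding pr_def using orthonormal_inj[OF assms] by (simp add: sum.reindex)
  moreover have "pr (range v) *v x = x" for x
    using pr_fix[OF _ orthonormal_ortho[OF assms]] assms by (simp add: orthonormal_basis_def)
  ultimately show ?thesis by (simp add: matrix_eq)
qed

lemma onb_zero: assumes "orthonormal_basis v" "\<And>i j. cinner (v i) (A *v v j) = 0" shows "A = 0"
proof -
  have Av: "A *v v j = 0" for j
  proof -
    have "A *v v j = (\<Sum>i\<in>UNIV. outer (v i) (v i)) *v (A *v v j)" by (simp add: onb_sum[OF assms(1)])
    also have "\<dots> = 0" by (simp add: mv_sum_l outer_mult_vec assms(2))
    finally show ?thesis .
  qed
  have "A = A ** (\<Sum>i\<in>UNIV. outer (v i) (v i))" by (simp add: onb_sum[OF assms(1)])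
  also have "\<dots> = 0" by (simp add: mm_sum_l mat_mult_outer Av outer_eq_0)
  finally show ?thesis by (simp add: vec_eq_iff)
qed

lemma proj_adj_cinner: "is_projection P \<Longrightarrow> cinner (P *v x) y = cinner x (P *v y)"
  by (simp add: cinner_adj is_projection_def)




definition fixs :: "'n::finite cmat \<Rightarrow> (complex^'n) set" where
  "fixs P = {x. P *v x = x}"

lemma fixs_sub: "vec.subspace (fixs P)"
  unfolding vec.subspace_def fixs_def
  by (auto simp: matrix_vector_right_distrib vec.scale)

lemma fixs_orth:
  assumes "is_projection A" "A ** B = 0" "x \<in> fixs A" "y \<in> fixs B"
  shows "cinner x y = 0"
proof -
  have "cinner x y = cinner (A *v x) (B *v y)" using assms(3,4) by (simp add: fixs_def)
  also have "\<dots> = cinner x (A *v (B *v y))" using assms(1) by (simp add: proj_adj_cinner)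
  also have "\<dots> = 0" using assms(2) by (simp add: matrix_vector_mul_assoc)
  finally show ?thesis .
qed

lemma proj_mult_adj: "is_projection P \<Longrightarrow> is_projection Q \<Longrightarrow> P ** Q = 0 \<Longrightarrow> Q ** P = 0"
  by (metis adj_mult adj_zero is_projection_def)

lemma onb_adapted:
  fixes P Q :: "'n::finite cmat"
  assumes P: "is_projection P" and Q: "is_projection Q" and PQ: "P ** Q = 0"
  shows "\<exists>v X Y. orthonormal_basis v \<and> X \<inter> Y = {} \<and>
    (\<forall>i. (i \<in> X \<longrightarrow> P *v v i = v i) \<and> (i \<notin> X \<longrightarrow> P *v v i = 0) \<and>
         (i \<in> Y \<longrightarrow> Q *v v i = v i) \<and> (i \<notin> Y \<longrightarrow> Q *v v i = 0))"
proof -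
  define R where "R = mat 1 - P - Q"
  have QP: "Q ** P = 0" by (rule proj_mult_adj[OF P Q PQ])
  have PP: "P ** P = P" and QQ: "Q ** Q = Q" using P Q by (auto simp: is_projection_def)
  have PR: "P ** R = 0" unfolding R_def by (simp add: mm_diff_l PP PQ)
  have QR: "Q ** R = 0" unfolding R_def by (simp add: mm_diff_l QQ QP)
  have RP: "R ** P = 0" unfolding R_def by (simp add: mm_diff_r PP QP)
  have RQ: "R ** Q = 0" unfolding R_def by (simp add: mm_diff_r QQ PQ)
  have RR: "R ** R = R" unfolding R_def by (simp add: mm_diff_l RP[unfolded R_def] RQ[unfolded R_def])
  have Ra: "mat_adj R = R" using P Q by (simp add: R_def adj_diff is_projection_def)
  have Rp: "is_projection R" using RR Ra by (simp add: is_projection_def)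
  obtain BP where BP: "finite BP" "BP \<subseteq> fixs P" "ortho BP" "vec.span BP = fixs P" using gs[OF fixs_sub] by blast
  obtain BQ where BQ: "finite BQ" "BQ \<subseteq> fixs Q" "ortho BQ" "vec.span BQ = fixs Q" using gs[OF fixs_sub] by blast
  obtain BR where BR: "finite BR" "BR \<subseteq> fixs R" "ortho BR" "vec.span BR = fixs R" using gs[OF fixs_sub] by blast
  define B where "B = BP \<union> BQ \<union> BR"
  have orth: "cinner x y = 0" if "(x \<in> BP \<and> y \<in> BQ) \<or> (x \<in> BP \<and> y \<in> BR) \<or> (x \<in> BQ \<and> y \<in> BP) \<or>
     (x \<in> BQ \<and> y \<in> BR) \<or> (x \<in> BR \<and> y \<in> BP) \<or> (x \<in> BR \<and> y \<in> BQ)" for x y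
    using that BP(2) BQ(2) BR(2) fixs_orth[OF P PQ] fixs_orth[OF P PR] fixs_orth[OF Q QP]
      fixs_orth[OF Q QR] fixs_orth[OF Rp RP] fixs_orth[OF Rp RQ] by blast
  have ne: "x \<noteq> 0" if "x \<in> B" for x using that ortho_ne0 BP(3) BQ(3) BR(3) by (auto simp: B_def)
  have orthB: "ortho B"
    unfolding ortho_def
  proof (intro ballI)
    fix x y assume x: "x \<in> B" and y: "y \<in> B"
    show "cinner x y = (if x = y then 1 else 0)"
    proof (cases "(x \<in> BP \<and> y \<in> BP) \<or> (x \<in> BQ \<and> y \<in> BQ) \<or> (x \<in> BR \<and> y \<in> BR)")
      case True then show ?thesis using BP(3) BQ(3) BR(3) unfolding ortho_def by blast
    next
      case False
      then have c0: "cinner x y = 0" using x y orth unfolding B_def by blast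
      moreover have "x \<noteq> y"
      proof
        assume "x = y"
        with c0 have "x = 0" by simp
        with ne x show False by blast
      qed
      ultimately show ?thesis by simp
    qed
  qed
  have finB: "finite B" using BP BQ BR by (simp add: B_def)
  have spanB: "vec.span B = UNIV"
  proof -
    have "x \<in> vec.span B" for x
    proof -
      have "P *v x \<in> fixs P" "Q *v x \<in> fixs Q" "R *v x \<in> fixs R"
        using PP QQ RR by (simp_all add: fixs_def matrix_vector_mul_assoc)
      then have "P *v x \<in> vec.span B" "Q *v x \<in> vec.span B" "R *v x \<in> vec.span B"
        using BP(4) BQ(4) BR(4) vec.span_mono[of BP B] vec.span_mono[of BQ B] vec.span_mono[of BR B]
        by (auto simp: B_def)
      then have "P *v x + Q *v x + R *v x \<in> vec.span B" by (intro vec.span_add)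
      moreover have "P *v x + Q *v x + R *v x = x"
        by (simp add: R_def matrix_vector_mult_diff_rdistrib)
      ultimately show ?thesis by simp
    qed
    then show ?thesis by auto
  qed
  have cardB: "card B = CARD('n)"
  proof -
    have "card B = vec.dim (UNIV::(complex^'n) set)"
      by (rule vec.basis_card_eq_dim) (use ortho_indep[OF finB orthB] spanB in auto)
    then show ?thesis by (simp only: vec_dim_card)
  qed
  obtain h where h: "bij_betw h (UNIV::'n set) B"
    using finite_same_card_bij[of "UNIV::'n set" B] finB cardB by auto
  have hinj: "h i = h j \<longleftrightarrow> i = j" for i j using h by (auto simp: bij_betw_def inj_on_def)
  have hB: "h i \<in> B" for i using h by (auto simp: bij_betw_def)
  have hr: "range h = B" using h by (auto simp: bij_betw_def)
  have onb: "orthonormal_basis h"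
    unfolding orthonormal_basis_def
  proof
    show "\<forall>i j. cinner (h i) (h j) = (if i = j then 1 else 0)"
      using orthB hB hinj unfolding ortho_def by metis
    show "vec.span (range h) = UNIV" using hr spanB by simp
  qed
  define X where "X = {i. h i \<in> BP}"
  define Y where "Y = {i. h i \<in> BQ}"
  have PQx: "P *v x = x \<Longrightarrow> Q *v x = x \<Longrightarrow> x = 0" for x
    by (metis PQ matrix_vector_mul_assoc matrix_vector_mult_0)
  have "X \<inter> Y = {}"
  proof -
    have "h i \<notin> BP \<or> h i \<notin> BQ" for i
      using PQx[of "h i"] BP(2) BQ(2) ne[OF hB[of i]] by (auto simp: fixs_def)
    then show ?thesis by (auto simp: X_def Y_def)
  qed
  moreover have "\<forall>i. (i \<in> X \<longrightarrow> P *v h i = h i) \<and> (i \<notin> X \<longrightarrow> P *v h i = 0) \<and>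
         (i \<in> Y \<longrightarrow> Q *v h i = h i) \<and> (i \<notin> Y \<longrightarrow> Q *v h i = 0)"
  proof (intro allI conjI impI)
    fix i
    have f: "x \<in> BP \<Longrightarrow> P *v x = x" "x \<in> BQ \<Longrightarrow> Q *v x = x" "x \<in> BR \<Longrightarrow> R *v x = x" for x
      using BP(2) BQ(2) BR(2) by (auto simp: fixs_def)
    have z: "P *v (A *v x) = 0" if "P ** A = 0" for A x using that by (simp add: matrix_vector_mul_assoc)
    have z2: "Q *v (A *v x) = 0" if "Q ** A = 0" for A x using that by (simp add: matrix_vector_mul_assoc)
    show "i \<in> X \<Longrightarrow> P *v h i = h i" using f by (simp add: X_def)
    show "i \<in> Y \<Longrightarrow> Q *v h i = h i" using f by (simp add: Y_def)
    show "i \<notin> X \<Longrightarrow> P *v h i = 0"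
    proof -
      assume "i \<notin> X"
      then have "h i \<in> BQ \<or> h i \<in> BR" using hB[of i] by (auto simp: X_def B_def)
      then show ?thesis using f z[OF PQ, of "h i"] z[OF PR, of "h i"] by auto
    qed
    show "i \<notin> Y \<Longrightarrow> Q *v h i = 0"
    proof -
      assume "i \<notin> Y"
      then have "h i \<in> BP \<or> h i \<in> BR" using hB[of i] by (auto simp: Y_def B_def)
      then show ?thesis using f z2[OF QP, of "h i"] z2[OF QR, of "h i"] by auto
    qed
  qed
  ultimately show ?thesis using onb by blast
qed

lemma proj_decomp:
  assumes "orthonormal_basis v" "\<And>i. i \<in> X \<Longrightarrow> P *v v i = v i" "\<And>i. i \<notin> X \<Longrightarrow> P *v v i = 0"
  shows "P = (\<Sum>i\<in>X. outer (v i) (v i))"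
proof -
  have "P = P ** (\<Sum>i\<in>UNIV. outer (v i) (v i))" by (simp add: onb_sum[OF assms(1)])
  also have "\<dots> = (\<Sum>i\<in>UNIV. if i \<in> X then outer (v i) (v i) else 0)"
    unfolding mm_sum_l mat_mult_outer by (rule sum.cong) (auto simp: assms(2,3))
  also have "\<dots> = (\<Sum>i\<in>X. outer (v i) (v i))" by (simp add: sum.If_cases)
  finally show ?thesis .
qed

definition vcnj :: "complex^'n::finite \<Rightarrow> complex^'n" where
  "vcnj x = (\<chi> i. cnj (x$i))"

lemma rank_pr:
  assumes onb: "orthonormal_basis v"
  shows "rank (\<Sum>i\<in>X. outer (v i) (v i)) = card X"
proof -
  define P where "P = (\<Sum>i\<in>X. outer (v i) (v i))"
  define w where "w k = vcnj (v k)" for k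
  have vo: "cinner (v a) (v b) = (if a = b then 1 else 0)" for a b
    using onb by (simp add: orthonormal_basis_def)
  have wo: "cinner (w a) (w b) = (if a = b then 1 else 0)" for a b
  proof -
    have "cinner (w a) (w b) = cnj (cinner (v a) (v b))"
      by (simp add: w_def vcnj_def cinner_def mult.commute)
    then show ?thesis using vo by simp
  qed
  have winj: "w a = w b \<longleftrightarrow> a = b" for a b
    using wo[of a b] wo[of b b] by (metis one_neq_zero)
  have orthW: "ortho (w ` X)" using wo winj unfolding ortho_def by auto
  have Pent: "P $ i $ j = (\<Sum>k\<in>X. v k $ i * cnj (v k $ j))" for i j
    by (simp add: P_def outer_def)
  have rowP: "row i P = (\<Sum>k\<in>X. (v k $ i) *s w k)" for i
    by (simp add: row_def vec_eq_iff Pent w_def vcnj_def)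
  have wrow: "w m = (\<Sum>i\<in>UNIV. cnj (v m $ i) *s row i P)" if "m \<in> X" for m
  proof -
    have "(\<Sum>i\<in>UNIV. cnj (v m $ i) * (\<Sum>k\<in>X. v k $ i * cnj (v k $ j))) =
          (\<Sum>k\<in>X. cinner (v m) (v k) * cnj (v k $ j))" for j
      by (simp add: cinner_def sum_distrib_left sum_distrib_right mult_ac) (rule sum.swap)
    also have "\<dots> j = cnj (v m $ j)" for j
      using that by (simp add: vo if_distrib if_distribR cong: if_cong)
    finally show ?thesis by (simp add: vec_eq_iff row_def Pent w_def vcnj_def)
  qed
  have "vec.span (rows P) = vec.span (w ` X)"
    unfolding vec.span_eq
  proof
    show "rows P \<subseteq> vec.span (w ` X)"
    proof
      fix r assume "r \<in> rows P"
      then obtain i where ri: "r = row i P" by (auto simp: rows_def)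
      show "r \<in> vec.span (w ` X)" unfolding ri rowP
        apply (intro vec.span_sum) apply (rule vec.span_scale) apply (rule vec.span_base) by auto
    qed
    show "w ` X \<subseteq> vec.span (rows P)"
    proof
      fix r assume "r \<in> w ` X"
      then obtain m where m: "m \<in> X" "r = w m" by auto
      show "r \<in> vec.span (rows P)" unfolding m(2) wrow[OF m(1)]
        apply (intro vec.span_sum) apply (rule vec.span_scale) apply (rule vec.span_base)
        by (auto simp: rows_def)
    qed
  qed
  then have "vec.dim (rows P) = vec.dim (w ` X)" by (metis vec.dim_span)
  also have "\<dots> = card (w ` X)"
  proof (cases "finite X")
    case True
    then show ?thesis by (intro vec.dim_eq_card_independent ortho_indep orthW) auto
  qed simp
  also have "\<dots> = card X" using winj by (simp add: card_image inj_on_def)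
  finally show ?thesis by (simp add: P_def row_rank_def_gen)
qed




definition iter :: "'n::finite cmat \<Rightarrow> nat \<Rightarrow> complex^'n \<Rightarrow> complex^'n" where
  "iter f i x = ((\<lambda>y. f *v y) ^^ i) x"

lemma iter_0 [simp]: "iter f 0 x = x" by (simp add: iter_def)
lemma iter_Suc [simp]: "iter f (Suc i) x = f *v iter f i x" by (simp add: iter_def)

definition peval :: "complex poly \<Rightarrow> 'n::finite cmat \<Rightarrow> complex^'n \<Rightarrow> complex^'n" where
  "peval p f x = (\<Sum>i\<le>degree p. coeff p i *s iter f i x)"

lemma peval_bound: "degree p \<le> N \<Longrightarrow> peval p f x = (\<Sum>i\<le>N. coeff p i *s iter f i x)"
  unfolding peval_def by (rule sum.mono_neutral_left) (auto simp: coeff_eq_0)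

lemma peval_add: "peval (p + q) f x = peval p f x + peval q f x"
proof -
  define N where "N = max (degree p) (degree q)"
  have "degree (p + q) \<le> N" "degree p \<le> N" "degree q \<le> N"
    using degree_add_le_max[of p q] by (auto simp: N_def)
  then show ?thesis
    by (simp add: peval_bound[of _ N] sum.distrib vector_sadd_rdistrib)
qed

lemma peval_smult: "peval (smult c p) f x = c *s peval p f x"
proof -
  have "degree (smult c p) \<le> degree p" by (rule degree_smult_le)
  then have "peval (smult c p) f x = (\<Sum>i\<le>degree p. (c * coeff p i) *s iter f i x)"
    by (simp add: peval_bound)
  also have "\<dots> = c *s peval p f x"
    by (simp add: peval_def vec.scale_sum_right vector_smult_assoc)
  finally show ?thesis .
qed

lemma peval_X: "peval (pCons 0 q) f x = f *v peval q f x"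
proof -
  have "degree (pCons 0 q) \<le> Suc (degree q)" by (rule degree_pCons_le)
  then have "peval (pCons 0 q) f x = (\<Sum>i\<le>Suc (degree q). coeff (pCons 0 q) i *s iter f i x)"
    by (rule peval_bound)
  also have "\<dots> = (\<Sum>i\<le>degree q. coeff q i *s iter f (Suc i) x)"
    by (subst sum.atMost_Suc_shift) simp
  also have "\<dots> = f *v peval q f x"
    by (simp add: peval_def vec.sum vec.scale)
  finally show ?thesis .
qed

lemma peval_lin: "peval ([:-l, 1:] * q) f x = f *v peval q f x - l *s peval q f x"
proof -
  have eq: "[:-l, 1:] * q = smult (-l) q + pCons 0 q" by simp
  show ?thesis unfolding eq peval_add peval_smult peval_X by (simp add: vector_smult_lneg)
qed

lemma iter_in: "vec.subspace W \<Longrightarrow> x \<in> W \<Longrightarrow> (\<And>y. y \<in> W \<Longrightarrow> f *v y \<in> W) \<Longrightarrow> iter f i x \<in> W"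
  by (induct i) auto

lemma peval_in: "vec.subspace W \<Longrightarrow> x \<in> W \<Longrightarrow> (\<And>y. y \<in> W \<Longrightarrow> f *v y \<in> W) \<Longrightarrow> peval p f x \<in> W"
  unfolding peval_def by (intro vec.subspace_sum vec.subspace_scale iter_in) auto

lemma eig_aux:
  fixes f :: "'n::finite cmat"
  assumes W: "vec.subspace W" and inv: "\<And>y. y \<in> W \<Longrightarrow> f *v y \<in> W"
  shows "p \<noteq> 0 \<Longrightarrow> x \<in> W \<Longrightarrow> x \<noteq> 0 \<Longrightarrow> peval p f x = 0 \<Longrightarrow> \<exists>z\<in>W. z \<noteq> 0 \<and> (\<exists>l. f *v z = l *s z)"
proof (induct "degree p" arbitrary: p rule: less_induct)
  case less
  show ?case
  proof (cases "degree p = 0")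
    case True
    then have p: "p = [:coeff p 0:]" using degree_0_id by metis
    then have c: "coeff p 0 \<noteq> 0" using less(2) by (metis pCons_0_0)
    have "peval p f x = coeff p 0 *s x" using True by (simp add: peval_def)
    then have "peval p f x \<noteq> 0" using c less(4) by (simp add: vec.scale_eq_0_iff)
    then show ?thesis using less(5) by simp
  next
    case False
    then have "\<not> constant (poly p)" by (simp add: constant_degree)
    then obtain l where "poly p l = 0" using fundamental_theorem_of_algebra by blast
    then have "[:-l, 1:] dvd p" by (simp add: poly_eq_0_iff_dvd)
    then obtain q where q: "p = [:-l, 1:] * q" by (auto elim: dvdE)
    have q0: "q \<noteq> 0" using q less(2) by auto
    have "degree ([:-l, 1:] * q) = degree [:-l, 1:] + degree q"
      by (rule degree_mult_eq) (use q0 in simp_all)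
    then have dq: "degree q < degree p" using q by simp
    define y where "y = peval q f x"
    have yW: "y \<in> W" unfolding y_def by (rule peval_in[OF W less(3) inv])
    have fy: "f *v y = l *s y" using less(5) q peval_lin[of l q f x] by (simp add: y_def)
    show ?thesis
    proof (cases "y = 0")
      case False then show ?thesis using yW fy by blast
    next
      case True
      show ?thesis by (rule less(1)[OF dq q0 less(3) less(4)]) (use True y_def in simp)
    qed
  qed
qed

lemma annih:
  fixes f :: "'n::finite cmat"
  shows "\<exists>p. p \<noteq> 0 \<and> peval p f x = 0"
proof -
  define d where "d = CARD('n)"
  have "\<exists>c. (\<exists>k\<le>d. c k \<noteq> 0) \<and> (\<Sum>k\<le>d. c k *s iter f k x) = 0"
  proof (cases "inj_on (\<lambda>k. iter f k x) {..d}")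
    case True
    define S where "S = (\<lambda>k. iter f k x) ` {..d}"
    have cS: "card S = Suc d" using True by (simp add: S_def card_image)
    have "vec.dependent S"
    proof (rule ccontr)
      assume "vec.independent S"
      then have "card S \<le> vec.dim S" using vec.independent_bound_general by blast
      also have "\<dots> \<le> vec.dim (UNIV :: (complex^'n) set)" by (rule vec.dim_subset) simp
      also have "\<dots> = d" by (simp only: vec_dim_card d_def)
      finally show False using cS by simp
    qed
    moreover have "finite S" by (simp add: S_def)
    ultimately obtain u where u: "\<exists>v\<in>S. u v \<noteq> 0" "(\<Sum>v\<in>S. u v *s v) = 0"
      using vec.dependent_finite by blast
    show ?thesis
    proof (rule exI[where x="\<lambda>k. u (iter f k x)"], rule conjI)
      from u(1) obtain v where v: "v \<in> S" "u v \<noteq> 0" by blast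
      then obtain k where "k \<le> d" "v = iter f k x" unfolding S_def by blast
      then show "\<exists>k\<le>d. u (iter f k x) \<noteq> 0" using v by blast
      have "(\<Sum>v\<in>S. u v *s v) = (\<Sum>k\<le>d. u (iter f k x) *s iter f k x)"
        unfolding S_def sum.reindex[OF True] o_def ..
      then show "(\<Sum>k\<le>d. u (iter f k x) *s iter f k x) = 0" using u(2) by simp
    qed
  next
    case False
    then obtain i j where ij: "i \<le> d" "j \<le> d" "i \<noteq> j" "iter f i x = iter f j x"
      by (auto simp: inj_on_def)
    define c where "c k = (if k = i then 1 else if k = j then -1 else (0::complex))" for k
    show ?thesis
    proof (rule exI[where x=c], rule conjI)
      show "\<exists>k\<le>d. c k \<noteq> 0" using ij by (auto simp: c_def)
      have "(\<Sum>k\<le>d. c k *s iter f k x) = (\<Sum>k\<in>{i, j}. c k *s iter f k x)"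
        by (rule sum.mono_neutral_right) (use ij in \<open>auto simp: c_def\<close>)
      also have "\<dots> = c i *s iter f i x + c j *s iter f j x" using ij(3) by simp
      also have "\<dots> = 0" using ij(3,4) by (simp add: c_def)
      finally show "(\<Sum>k\<le>d. c k *s iter f k x) = 0" .
    qed
  qed
  then obtain c where c: "\<exists>k\<le>d. c k \<noteq> 0" "(\<Sum>k\<le>d. c k *s iter f k x) = 0" by blast
  define p where "p = (\<Sum>k\<le>d. monom (c k) k)"
  have cp: "coeff p k = (if k \<le> d then c k else 0)" for k
    by (simp add: p_def coeff_sum coeff_monom)
  have "degree p \<le> d" by (rule degree_le) (simp add: cp)
  then have "peval p f x = (\<Sum>k\<le>d. coeff p k *s iter f k x)" by (rule peval_bound)
  also have "\<dots> = (\<Sum>k\<le>d. c k *s iter f k x)" by (rule sum.cong) (simp_all add: cp)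
  also have "\<dots> = 0" by (rule c(2))
  finally have pe: "peval p f x = 0" .
  moreover have "p \<noteq> 0"
  proof
    assume "p = 0"
    from c(1) obtain k where "k \<le> d" "c k \<noteq> 0" by blast
    with cp[of k] \<open>p = 0\<close> show False by simp
  qed
  ultimately show ?thesis by (intro exI[of _ p]) simp
qed

lemma eigen:
  fixes f :: "'n::finite cmat"
  assumes W: "vec.subspace W" and inv: "\<And>y. y \<in> W \<Longrightarrow> f *v y \<in> W" and x: "x \<in> W" "x \<noteq> 0"
  shows "\<exists>z\<in>W. z \<noteq> 0 \<and> (\<exists>l. f *v z = l *s z)"
proof -
  obtain p where "p \<noteq> 0" "peval p f x = 0" using annih by blast
  then show ?thesis using eig_aux[OF W inv] x by blast
qed




lemma dim_image_lt:
  fixes g :: "'n::finite cmat"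
  assumes W: "vec.subspace W" and z: "z \<in> W" "z \<noteq> 0" "g *v z = 0"
  shows "vec.dim ((\<lambda>y. g *v y) ` W) < vec.dim W"
proof -
  have "{z} \<subseteq> W" "vec.independent {z}" using z by auto
  then obtain Bs where Bs: "{z} \<subseteq> Bs" "Bs \<subseteq> W" "vec.independent Bs" "W \<subseteq> vec.span Bs"
    by (rule vec.maximal_independent_subset_extend)
  have fin: "finite Bs" using Bs(3) vec.independent_bound_general by blast
  have cB: "card Bs = vec.dim W" by (rule vec.basis_card_eq_dim) (use Bs in auto)
  have sub: "(\<lambda>y. g *v y) ` W \<subseteq> vec.span ((\<lambda>y. g *v y) ` (Bs - {z}))"
  proof
    fix t assume "t \<in> (\<lambda>y. g *v y) ` W"
    then obtain w where w: "w \<in> W" "t = g *v w" by blast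
    have "t \<in> (\<lambda>y. g *v y) ` vec.span Bs" using w Bs(4) by blast
    also have "\<dots> = vec.span ((\<lambda>y. g *v y) ` Bs)"
      by (rule vec.linear_span_image[OF matrix_vector_mul_linear_gen, symmetric])
    also have "(\<lambda>y. g *v y) ` Bs \<subseteq> insert 0 ((\<lambda>y. g *v y) ` (Bs - {z}))" using z(3) by auto
    then have "vec.span ((\<lambda>y. g *v y) ` Bs) \<subseteq> vec.span (insert 0 ((\<lambda>y. g *v y) ` (Bs - {z})))"
      by (rule vec.span_mono)
    also have "\<dots> = vec.span ((\<lambda>y. g *v y) ` (Bs - {z}))" by (rule vec.span_insert_0)
    finally show "t \<in> vec.span ((\<lambda>y. g *v y) ` (Bs - {z}))" .
  qed
  have "vec.dim ((\<lambda>y. g *v y) ` W) \<le> card ((\<lambda>y. g *v y) ` (Bs - {z}))"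
    by (rule vec.dim_le_card[OF sub]) (use fin in simp)
  also have "\<dots> \<le> card (Bs - {z})" by (rule card_image_le) (use fin in simp)
  also have "\<dots> < card Bs" using fin Bs(1) by (intro card_Diff1_less) auto
  finally show ?thesis using cB by simp
qed

definition rk :: "'n::finite cmat \<Rightarrow> nat" where
  "rk M = vec.dim (range (\<lambda>y. M *v y))"

lemma col_decomp: "(M::'n::finite cmat) = (\<Sum>j\<in>UNIV. outer (M *v axis j 1) (axis j 1))"
proof -
  have "(\<Sum>j\<in>UNIV. outer (M *v axis j 1) (axis j 1)) $ i $ k = M $ i $ k" for i k
  proof -
    have "(\<Sum>j\<in>UNIV. outer (M *v axis j 1) (axis j 1)) $ i $ k =
        (\<Sum>j\<in>UNIV. (M *v axis j 1) $ i * cnj (axis j 1 $ k))"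
      by (simp add: outer_def)
    also have "\<dots> = (\<Sum>j\<in>UNIV. if j = k then M $ i $ k else 0)"
      by (rule sum.cong) (auto simp: axis_def matrix_vector_mult_def if_distrib if_distribR cong: if_cong)
    also have "\<dots> = M $ i $ k" by simp
    finally show ?thesis .
  qed
  then show ?thesis by (simp add: vec_eq_iff)
qed

locale bsetting =
  fixes B :: "'n::finite cmat set" and Q0 :: "'n cmat"
  assumes Bsub: "csubspace B" and Q0B: "Q0 \<in> B" and Bc: "B \<subseteq> corner Q0"
    and Q0p: "is_projection Q0"
    and mult: "\<And>X Y. X \<in> B \<Longrightarrow> Y \<in> B \<Longrightarrow> X ** Y \<in> B"
    and adj: "\<And>X. X \<in> B \<Longrightarrow> mat_adj X \<in> B"
    and irr: "\<And>Q. is_projection Q \<Longrightarrow> Q ** Q0 = Q \<Longrightarrow> (\<forall>X\<in>B. Q ** X = X ** Q) \<Longrightarrow> Q = 0 \<or> Q = Q0"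
begin

lemma Q0i: "Q0 ** Q0 = Q0" using Q0p by (simp add: is_projection_def)
lemma Q0a: "mat_adj Q0 = Q0" using Q0p by (simp add: is_projection_def)

lemma BQ0: "X \<in> B \<Longrightarrow> Q0 ** X = X \<and> X ** Q0 = X"
  using Bc corner_iff[OF Q0i] by blast

lemma Bfix: "X \<in> B \<Longrightarrow> Q0 *v (X *v y) = X *v y"
  using BQ0 by (simp add: matrix_vector_mul_assoc)

lemma trans:
  assumes x: "x \<noteq> 0" "Q0 *v x = x" and y: "Q0 *v y = y"
  shows "\<exists>b\<in>B. b *v x = y"
proof -
  define V where "V = {b *v x | b. b \<in> B}"
  have subV: "vec.subspace V"
    unfolding vec.subspace_def V_def
  proof (intro conjI ballI allI)
    show "0 \<in> {b *v x |b. b \<in> B}" using csub_0[OF Bsub] by (intro CollectI exI[of _ 0]) simp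
    fix s t assume "s \<in> {b *v x |b. b \<in> B}" "t \<in> {b *v x |b. b \<in> B}"
    then obtain b1 b2 where "b1 \<in> B" "b2 \<in> B" "s = b1 *v x" "t = b2 *v x" by blast
    then show "s + t \<in> {b *v x |b. b \<in> B}"
      by (intro CollectI exI[of _ "b1 + b2"]) (simp add: csub_add[OF Bsub] matrix_vector_mult_add_rdistrib)
  next
    fix c s assume "s \<in> {b *v x |b. b \<in> B}"
    then obtain b1 where "b1 \<in> B" "s = b1 *v x" by blast
    then show "c *s s \<in> {b *v x |b. b \<in> B}"
      by (intro CollectI exI[of _ "cscale c b1"]) (simp add: csub_scale[OF Bsub] cscale_mv)
  qed
  obtain BV where BV: "finite BV" "BV \<subseteq> V" "ortho BV" "vec.span BV = V" using gs[OF subV] by blast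
  define E where "E = pr BV"
  have Ep: "is_projection E" unfolding E_def by (rule pr_proj[OF BV(1,3)])
  have Efix: "t \<in> V \<Longrightarrow> E *v t = t" for t unfolding E_def using pr_fix[OF BV(1,3)] BV(4) by simp
  have Ein: "E *v t \<in> V" for t unfolding E_def using pr_range[of BV t] BV(4) by simp
  have Vinv: "b \<in> B \<Longrightarrow> t \<in> V \<Longrightarrow> b *v t \<in> V" for b t
    unfolding V_def using mult by (auto simp: matrix_vector_mul_assoc)
  have EbE: "E ** b ** E = b ** E" if "b \<in> B" for b
    unfolding matrix_eq
  proof
    fix t
    have "(E ** b ** E) *v t = E *v (b *v (E *v t))" by (simp add: matrix_vector_mul_assoc matrix_mul_assoc)
    also have "\<dots> = b *v (E *v t)" by (rule Efix[OF Vinv[OF that Ein]])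
    finally show "(E ** b ** E) *v t = (b ** E) *v t" by (simp add: matrix_vector_mul_assoc)
  qed
  have Ea: "mat_adj E = E" using Ep by (simp add: is_projection_def)
  have comm: "E ** b = b ** E" if "b \<in> B" for b
  proof -
    have "E ** mat_adj b ** E = mat_adj b ** E" by (rule EbE[OF adj[OF that]])
    then have "mat_adj (E ** mat_adj b ** E) = mat_adj (mat_adj b ** E)" by simp
    then have "E ** b ** E = E ** b" by (simp add: adj_mult Ea matrix_mul_assoc)
    with EbE[OF that] show ?thesis by simp
  qed
  have VQ: "t \<in> V \<Longrightarrow> Q0 *v t = t" for t unfolding V_def using Bfix by auto
  have Q0E: "Q0 ** E = E" unfolding matrix_eq
    by (simp add: matrix_vector_mul_assoc[symmetric] VQ[OF Ein])
  have EQ0: "E ** Q0 = E"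
  proof -
    have "mat_adj (Q0 ** E) = mat_adj E" using Q0E by simp
    then show ?thesis by (simp add: adj_mult Ea Q0a)
  qed
  have xV: "x \<in> V" unfolding V_def using Q0B x(2) by (intro CollectI exI[of _ Q0]) simp
  have "E \<noteq> 0"
  proof
    assume "E = 0"
    then have "E *v x = 0" by simp
    with Efix[OF xV] x(1) show False by simp
  qed
  then have "E = Q0" using irr[OF Ep EQ0] comm by auto
  then have "y \<in> V" using Ein[of y] y by simp
  then show ?thesis unfolding V_def by blast
qed

lemma corner_in_B: "corner Q0 \<subseteq> B"
proof (cases "Q0 = 0")
  case True
  then show ?thesis using csub_0[OF Bsub] by (auto simp: corner_def)
next
  case False
  obtain a where a: "a \<in> B" "a \<noteq> 0" and amin: "\<And>c. c \<in> B \<Longrightarrow> c \<noteq> 0 \<Longrightarrow> rk a \<le> rk c"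
    using ex_has_least_nat[of "\<lambda>M. M \<in> B \<and> M \<noteq> 0" Q0 rk] Q0B False by blast
  define W where "W = range (\<lambda>y. a *v y)"
  have subW: "vec.subspace W"
    unfolding W_def vec.subspace_def
  proof (intro conjI ballI allI)
    have "0 = a *v 0" by simp
    then show "0 \<in> range ((*v) a)" by (rule range_eqI)
    fix s t assume "s \<in> range ((*v) a)" "t \<in> range ((*v) a)"
    then obtain p q where "s = a *v p" "t = a *v q" by blast
    then have "s + t = a *v (p + q)" by (simp add: matrix_vector_right_distrib)
    then show "s + t \<in> range ((*v) a)" by (rule range_eqI)
  next
    fix c s assume "s \<in> range ((*v) a)"
    then obtain p where "s = a *v p" by blast
    then have "c *s s = a *v (c *s p)" by (simp add: vec.scale)
    then show "c *s s \<in> range ((*v) a)" by (rule range_eqI)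
  qed
  have WQ: "t \<in> W \<Longrightarrow> Q0 *v t = t" for t unfolding W_def using Bfix[OF a(1)] by auto
  obtain x0 where x0: "a *v x0 \<noteq> 0" using a(2) by (metis matrix_eq matrix_vector_mult_0)
  have C1: "\<exists>l. a ** b ** a = cscale l a" if b: "b \<in> B" for b
  proof -
    have inv: "(a ** b) *v t \<in> W" if "t \<in> W" for t
      unfolding W_def by (simp add: matrix_vector_mul_assoc[symmetric])
    have "a *v x0 \<in> W" by (simp add: W_def)
    from eigen[OF subW inv this x0] obtain z l where z: "z \<in> W" "z \<noteq> 0" "(a ** b) *v z = l *s z"
      by blast
    define g where "g = a ** b - cscale l Q0"
    have gz: "g *v z = 0"
      by (simp add: g_def matrix_vector_mult_diff_rdistrib cscale_mv z(3) WQ[OF z(1)])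
    define c where "c = a ** b ** a - cscale l a"
    have cB: "c \<in> B" unfolding c_def
      by (intro csub_diff[OF Bsub] mult csub_scale[OF Bsub] a(1) b)
    have cg: "c = g ** a" using BQ0[OF a(1)] by (simp add: c_def g_def mm_diff_r cscale_mult_l)
    have rc: "range (\<lambda>y. c *v y) = (\<lambda>y. g *v y) ` W"
      unfolding W_def cg by (auto simp: matrix_vector_mul_assoc[symmetric] image_iff)
    have "rk c < rk a"
      unfolding rk_def rc W_def[symmetric] by (rule dim_image_lt[OF subW z(1,2) gz])
    then have "c = 0" using amin[OF cB] by fastforce
    then show ?thesis by (auto simp: c_def)
  qed
  define u where "u = a *v x0"
  have u0: "u \<noteq> 0" and uQ: "Q0 *v u = u" using x0 Bfix[OF a(1)] by (auto simp: u_def)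
  have ay: "\<exists>k. a *v y = k *s u" for y
  proof -
    have "Q0 *v (Q0 *v y) = Q0 *v y" by (simp add: matrix_vector_mul_assoc Q0i)
    from trans[OF u0 uQ this] obtain b where b: "b \<in> B" "b *v u = Q0 *v y" by blast
    obtain l where l: "a ** b ** a = cscale l a" using C1[OF b(1)] by blast
    have "a *v y = a *v (Q0 *v y)" using BQ0[OF a(1)] by (simp add: matrix_vector_mul_assoc)
    also have "\<dots> = (a ** b ** a) *v x0" by (simp add: b(2)[symmetric] u_def matrix_vector_mul_assoc matrix_mul_assoc)
    also have "\<dots> = l *s u" by (simp add: l cscale_mv u_def)
    finally show ?thesis by blast
  qed
  define w where "w = mat_adj a *v u"
  define kk where "kk = inverse (cinner u u)"
  have uu: "cinner u u \<noteq> 0" using u0 by simp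
  have arep: "a = cscale kk (outer u w)"
    unfolding matrix_eq
  proof
    fix y
    obtain k where k: "a *v y = k *s u" using ay by blast
    have "cinner w y = k * cinner u u"
      by (simp add: w_def cinner_adj[symmetric] k cinner_scale_right)
    then show "a *v y = cscale kk (outer u w) *v y"
      using uu by (simp add: cscale_mv outer_mult_vec k kk_def vector_smult_assoc)
  qed
  have w0: "w \<noteq> 0" using arep a(2) by (auto simp: outer_eq_0)
  have wQ: "Q0 *v w = w" unfolding w_def by (rule Bfix[OF adj[OF a(1)]])
  have C3: "outer y z \<in> B" if y: "Q0 *v y = y" and z: "Q0 *v z = z" for y z
  proof -
    obtain b1 where b1: "b1 \<in> B" "b1 *v u = y" using trans[OF u0 uQ y] by blast
    obtain b2 where b2: "b2 \<in> B" "b2 *v w = z" using trans[OF w0 wQ z] by blast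
    have "b1 ** a ** mat_adj b2 \<in> B" by (intro mult adj a(1) b1(1) b2(1))
    moreover have "b1 ** a ** mat_adj b2 = cscale kk (outer y z)"
      by (simp add: arep cscale_mult_l cscale_mult_r mat_mult_outer outer_mult_mat b1(2) b2(2))
    ultimately have "cscale kk (outer y z) \<in> B" by simp
    then have "cscale (cinner u u) (cscale kk (outer y z)) \<in> B" by (rule csub_scale[OF Bsub])
    then show ?thesis using uu by (simp add: cscale_cscale kk_def)
  qed
  show ?thesis
  proof
    fix M assume M: "M \<in> corner Q0"
    then have MQ: "Q0 ** M = M" "M ** Q0 = M" using corner_iff[OF Q0i] by auto
    have "M = M ** Q0" using MQ by simp
    also have "\<dots> = (\<Sum>j\<in>UNIV. outer (M *v axis j 1) (axis j 1)) ** Q0" by (subst col_decomp[of M]) simp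
    also have "\<dots> = (\<Sum>j\<in>UNIV. outer (M *v axis j 1) (Q0 *v axis j 1))"
      by (simp add: mm_sum_r outer_mult_mat Q0a)
    finally have Meq: "M = \<dots>" .
    have "(\<Sum>j\<in>UNIV. outer (M *v axis j 1) (Q0 *v axis j 1)) \<in> B"
    proof (rule csub_sum[OF Bsub], rule C3)
      fix j
      show "Q0 *v (M *v axis j 1) = M *v axis j 1" using MQ by (simp add: matrix_vector_mul_assoc)
      show "Q0 *v (Q0 *v axis j 1) = Q0 *v axis j 1" by (simp add: matrix_vector_mul_assoc Q0i)
    qed
    with Meq show "M \<in> B" by simp
  qed
qed

end




lemma proj_compl: "is_projection P \<Longrightarrow> is_projection (mat 1 - P)"
  unfolding is_projection_def by (simp add: mm_diff_l mm_diff_r adj_diff)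

lemma comp_qsetting:
  assumes qg: "quantum_graph S" and P: "is_projection P"
  shows "qsetting (compression P S) (mat 1 - P)"
proof -
  let ?Q = "mat 1 - P"
  have Qp: "is_projection ?Q" by (rule proj_compl[OF P])
  have QQ: "?Q ** ?Q = ?Q" and Qa: "mat_adj ?Q = ?Q" using Qp by (auto simp: is_projection_def)
  have S: "csubspace S" "\<And>A. A \<in> S \<Longrightarrow> mat_adj A \<in> S" "mat 1 \<in> S"
    using qg by (auto simp: quantum_graph_def)
  show ?thesis
  proof
    show "csubspace (compression P S)"
      unfolding csubspace_def compression_def
    proof (intro conjI ballI allI)
      show "0 \<in> {?Q ** A ** ?Q |A. A \<in> S}"
        using csub_0[OF S(1)] by (intro CollectI exI[of _ 0]) simp
      fix X Y assume "X \<in> {?Q ** A ** ?Q |A. A \<in> S}" "Y \<in> {?Q ** A ** ?Q |A. A \<in> S}"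
      then obtain A B where "A \<in> S" "B \<in> S" "X = ?Q ** A ** ?Q" "Y = ?Q ** B ** ?Q" by blast
      then show "X + Y \<in> {?Q ** A ** ?Q |A. A \<in> S}"
        by (intro CollectI exI[of _ "A + B"]) (simp add: csub_add[OF S(1)] matrix_add_ldistrib mm_add_r)
    next
      fix c X assume "X \<in> {?Q ** A ** ?Q |A. A \<in> S}"
      then obtain A where "A \<in> S" "X = ?Q ** A ** ?Q" by blast
      then show "cscale c X \<in> {?Q ** A ** ?Q |A. A \<in> S}"
        by (intro CollectI exI[of _ "cscale c A"]) (simp add: csub_scale[OF S(1)] cscale_mult_l cscale_mult_r)
    qed
    fix X assume "X \<in> compression P S"
    then obtain A where "A \<in> S" "X = ?Q ** A ** ?Q" by (auto simp: compression_def)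
    then show "mat_adj X \<in> compression P S"
      unfolding compression_def using S(2)
      by (intro CollectI exI[of _ "mat_adj A"]) (simp add: adj_mult Qa matrix_mul_assoc)
  next
    show "?Q \<in> compression P S" unfolding compression_def using S(3) QQ
      by (intro CollectI exI[of _ "mat 1"]) simp
    show "compression P S \<subseteq> corner ?Q" by (auto simp: compression_def corner_def)
    show "is_projection ?Q" by (rule Qp)
  qed
qed

lemma disc_Q:
  assumes qs: "qsetting T Q0" and nc: "\<not> qconnected_in Q0 T"
  shows "\<exists>Q. is_projection Q \<and> Q ** Q0 = Q \<and> Q \<noteq> 0 \<and> Q \<noteq> Q0 \<and> (\<forall>M\<in>T. Q ** M = M ** Q)"
proof (rule ccontr)
  assume nQ: "\<not> ?thesis"
  interpret qsetting T Q0 by (rule qs)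
  obtain M where M: "M \<ge> 1" "csubspace (qpow T M)" "Q0 \<in> qpow T M" "qpow T M \<subseteq> corner Q0"
    "T \<subseteq> qpow T M" "\<forall>X\<in>qpow T M. \<forall>Y\<in>qpow T M. X ** Y \<in> qpow T M"
    "\<forall>X\<in>qpow T M. mat_adj X \<in> qpow T M"
    using stab by blast
  have "bsetting (qpow T M) Q0"
  proof
    show "csubspace (qpow T M)" "Q0 \<in> qpow T M" "qpow T M \<subseteq> corner Q0" "is_projection Q0"
      using M Q0p by auto
    show "X \<in> qpow T M \<Longrightarrow> Y \<in> qpow T M \<Longrightarrow> X ** Y \<in> qpow T M" for X Y using M by blast
    show "X \<in> qpow T M \<Longrightarrow> mat_adj X \<in> qpow T M" for X using M by blast
    fix Q assume "is_projection Q" "Q ** Q0 = Q" "\<forall>X\<in>qpow T M. Q ** X = X ** Q"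
    then show "Q = 0 \<or> Q = Q0" using nQ M(5) by blast
  qed
  then have "corner Q0 \<subseteq> qpow T M" by (rule bsetting.corner_in_B)
  then have "qpow T M = corner Q0" using M(4) by blast
  then have "qconnected_in Q0 T" unfolding qconnected_in_def using M(1) by blast
  with nc show False by simp
qed




lemma onb_cinner: "orthonormal_basis v \<Longrightarrow> cinner (v i) (v j) = (if i = j then 1 else 0)"
  by (simp add: orthonormal_basis_def)

lemma onb_ne0: "orthonormal_basis v \<Longrightarrow> v i \<noteq> 0"
  using onb_cinner[of v i i] by auto

lemma sumX_apply:
  assumes "orthonormal_basis v"
  shows "(\<Sum>i\<in>X. outer (v i) (v i)) *v v j = (if j \<in> X then v j else 0)"
proof -
  have "(\<Sum>i\<in>X. outer (v i) (v i)) *v v j = (\<Sum>i\<in>X. (if i = j then 1 else 0) *s v i)"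
    by (simp add: mv_sum_l outer_mult_vec onb_cinner[OF assms])
  also have "\<dots> = (\<Sum>i\<in>X. if i = j then v i else 0)" by (rule sum.cong) auto
  also have "\<dots> = (if j \<in> X then v j else 0)" by (simp add: sum.delta')
  finally show ?thesis .
qed

lemma sumX_proj:
  assumes onb: "orthonormal_basis v"
  shows "is_projection (\<Sum>i\<in>X. outer (v i) (v i))"
proof -
  have inj: "inj v" by (rule orthonormal_inj[OF onb])
  have "(\<Sum>i\<in>X. outer (v i) (v i)) = pr (v ` X)"
    unfolding pr_def by (simp add: sum.reindex inj_on_subset[OF inj])
  moreover have "ortho (v ` X)" using orthonormal_ortho[OF onb] by (auto simp: ortho_def)
  ultimately show ?thesis using pr_proj[of "v ` X"] by simp
qed

lemma cinner_proj_r: "is_projection Q \<Longrightarrow> cinner x (Q *v y) = cinner (Q *v x) y"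
  by (simp add: proj_adj_cinner)

lemma compr_entry:
  assumes Q: "is_projection Q0" and Qv: "\<And>i. Q0 *v v i = (if i \<in> R then v i else 0)"
  shows "cinner (v i) ((Q0 ** A ** Q0) *v v j) = (if i \<in> R \<and> j \<in> R then cinner (v i) (A *v v j) else 0)"
proof -
  have "cinner (v i) ((Q0 ** A ** Q0) *v v j) = cinner (v i) (Q0 *v (A *v (Q0 *v v j)))"
    by (simp add: matrix_vector_mul_assoc matrix_mul_assoc)
  also have "\<dots> = cinner (Q0 *v v i) (A *v (Q0 *v v j))" by (rule cinner_proj_r[OF Q])
  also have "\<dots> = (if i \<in> R \<and> j \<in> R then cinner (v i) (A *v v j) else 0)" by (simp add: Qv)
  finally show ?thesis .
qed

lemma qpow_in_comm:
  assumes T: "\<And>M. M \<in> T \<Longrightarrow> M ** Q = Q ** M" and m: "m \<ge> 1"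
  shows "qpow T m \<subseteq> {N. N ** Q = Q ** (N::'n::finite cmat)}"
  using m
proof (induct m)
  case 0 then show ?case by simp
next
  case (Suc m)
  let ?C = "{N. N ** Q = Q ** (N::'n::finite cmat)}"
  have Csub: "csubspace ?C" unfolding csubspace_def
    by (auto simp: mm_add_r matrix_add_ldistrib cscale_mult_l cscale_mult_r)
  show ?case
  proof (cases "m = 0")
    case True then show ?thesis using T by auto
  next
    case False
    then have m1: "m \<ge> 1" by simp
    have "set_prod (qpow T m) T \<subseteq> ?C"
    proof
      fix Z assume "Z \<in> set_prod (qpow T m) T"
      then obtain W t where Z: "Z = W ** t" "W \<in> qpow T m" "t \<in> T" by (auto simp: set_prod_def)
      have "W ** Q = Q ** W" using Suc(1)[OF m1] Z(2) by auto
      moreover have "t ** Q = Q ** t" using T[OF Z(3)] .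
      ultimately have "(W ** t) ** Q = Q ** (W ** t)" by (metis matrix_mul_assoc)
      then show "Z \<in> ?C" using Z by simp
    qed
    then have "cspan (set_prod (qpow T m) T) \<subseteq> ?C" by (rule cspan_min[OF Csub])
    then show ?thesis using m1 by (cases m) auto
  qed
qed

lemma Cv_sym: "quantum_graph S \<Longrightarrow> Cv v S i j \<Longrightarrow> Cv v S j i"
proof -
  assume qg: "quantum_graph S" and c: "Cv v S i j"
  then obtain A where A: "A \<in> S" "cinner (v i) (A *v v j) \<noteq> 0" "i \<noteq> j" by (auto simp: Cv_def)
  have "cinner (v j) (mat_adj A *v v i) = cinner (A *v v j) (v i)"
    using cinner_adj[of "v j" "mat_adj A" "v i"] by simp
  also have "\<dots> = cnj (cinner (v i) (A *v v j))" by (rule cinner_commute)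
  finally have "cinner (v j) (mat_adj A *v v i) = cnj (cinner (v i) (A *v v j))" .
  then have "cinner (v j) (mat_adj A *v v i) \<noteq> 0" using A by simp
  moreover have "mat_adj A \<in> S" using qg A by (simp add: quantum_graph_def)
  ultimately show ?thesis using A(3) by (auto simp: Cv_def)
qed




lemma dir1:
  fixes S :: "'n::finite cmat set"
  assumes qg: "quantum_graph S" and qk: "q_k_connected S k" and onb: "orthonormal_basis v"
    and sep: "c_separator (Cv v S) X"
  shows "k \<le> card X"
proof -
  define P where "P = (\<Sum>i\<in>X. outer (v i) (v i))"
  define Q0 where "Q0 = mat 1 - P"
  define R where "R = UNIV - X"
  have Pp: "is_projection P" unfolding P_def by (rule sumX_proj[OF onb])
  have Pv: "P *v v j = (if j \<in> X then v j else 0)" for j unfolding P_def by (rule sumX_apply[OF onb])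
  have Q0v: "Q0 *v v j = (if j \<in> R then v j else 0)" for j
    by (simp add: Q0_def R_def matrix_vector_mult_diff_rdistrib Pv)
  have Q0p: "is_projection Q0" unfolding Q0_def by (rule proj_compl[OF Pp])
  have QQ: "Q0 ** Q0 = Q0" and Qa: "mat_adj Q0 = Q0" using Q0p by (auto simp: is_projection_def)
  have rk: "rank P = card X" unfolding P_def by (rule rank_pr[OF onb])
  have S: "csubspace S" "\<And>A. A \<in> S \<Longrightarrow> mat_adj A \<in> S" "mat 1 \<in> S"
    using qg by (auto simp: quantum_graph_def)
  have Tdef: "compression P S = {Q0 ** A ** Q0 | A. A \<in> S}" by (simp add: compression_def Q0_def)
  have "q_separator S P"
  proof -
    have "\<not> graph_connected_on (Cv v S) R \<or> card R = 1"
      using sep by (simp add: c_separator_def R_def)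
    then show ?thesis
    proof
      assume "card R = 1"
      then obtain r where Rr: "R = {r}" by (rule card_1_singletonE)
      have Q0r: "Q0 = (\<Sum>i\<in>{r}. outer (v i) (v i))"
        by (rule proj_decomp[OF onb]) (auto simp: Q0v Rr)
      then have Q0r': "Q0 = outer (v r) (v r)" by simp
      have "Q0 \<noteq> 0" using Q0r' onb_ne0[OF onb] by (simp add: outer_eq_0)
      moreover have "compression P S = {cscale c Q0 | c. True}"
      proof
        show "compression P S \<subseteq> {cscale c Q0 | c. True}"
        proof
          fix M assume "M \<in> compression P S"
          then obtain A where "M = Q0 ** A ** Q0" using Tdef by auto
          then have "M = cscale (cinner (mat_adj A *v v r) (v r)) Q0"
            by (simp only: Q0r' outer_mult_mat[of "v r" "v r" A] outer_outer)
          then show "M \<in> {cscale c Q0 | c. True}" by blast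
        qed
        show "{cscale c Q0 | c. True} \<subseteq> compression P S"
        proof
          fix M assume "M \<in> {cscale c Q0 | c. True}"
          then obtain c where c: "M = cscale c Q0" by blast
          have "M = Q0 ** cscale c (mat 1) ** Q0" using c QQ by (simp add: cscale_mult_l cscale_mult_r)
          moreover have "cscale c (mat 1) \<in> S" using csub_scale[OF S(1) S(3)] .
          ultimately show "M \<in> compression P S" unfolding Tdef by blast
        qed
      qed
      ultimately have "one_dim (compression P S)" unfolding one_dim_def by blast
      then show ?thesis using Pp by (simp add: q_separator_def)
    next
      assume "\<not> graph_connected_on (Cv v S) R"
      define E where "E = {(a, b). a \<in> R \<and> b \<in> R \<and> Cv v S a b}"
      obtain x y where xy: "x \<in> R" "y \<in> R" "(x, y) \<notin> E\<^sup>*"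
        using \<open>\<not> graph_connected_on (Cv v S) R\<close> unfolding graph_connected_on_def E_def by blast
      define Y where "Y = {z \<in> R. (x, z) \<in> E\<^sup>*}"
      define QY where "QY = (\<Sum>i\<in>Y. outer (v i) (v i))"
      have QYv: "QY *v v j = (if j \<in> Y then v j else 0)" for j unfolding QY_def by (rule sumX_apply[OF onb])
      have QYp: "is_projection QY" unfolding QY_def by (rule sumX_proj[OF onb])
      have QYa: "mat_adj QY = QY" using QYp by (simp add: is_projection_def)
      have YR: "Y \<subseteq> R" by (auto simp: Y_def)
      have key1: "cinner (v i) (A *v v j) = 0" if "A \<in> S" "i \<in> Y" "j \<in> R" "j \<notin> Y" for A i j
      proof (rule ccontr)
        assume "cinner (v i) (A *v v j) \<noteq> 0"
        moreover have "i \<noteq> j" using that by auto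
        ultimately have "Cv v S i j" using that(1) by (auto simp: Cv_def)
        then have "(i, j) \<in> E" using that YR by (auto simp: E_def)
        moreover have "(x, i) \<in> E\<^sup>*" using that by (auto simp: Y_def)
        ultimately have "(x, j) \<in> E\<^sup>*" by (rule rtrancl_into_rtrancl[rotated])
        then show False using that by (auto simp: Y_def)
      qed
      have key2: "cinner (v j) (A *v v i) = 0" if "A \<in> S" "i \<in> Y" "j \<in> R" "j \<notin> Y" for A i j
      proof -
        have "cinner (v j) (A *v v i) = cinner (mat_adj A *v v j) (v i)" by (rule cinner_adj)
        also have "\<dots> = cnj (cinner (v i) (mat_adj A *v v j))" by (rule cinner_commute)
        also have "cinner (v i) (mat_adj A *v v j) = 0" by (rule key1[OF S(2)[OF that(1)] that(2-4)])
        finally show ?thesis by simp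
      qed
      have comm: "M ** QY = QY ** M" if Mc: "M \<in> compression P S" for M
      proof -
        obtain A where A: "A \<in> S" "M = Q0 ** A ** Q0" using Mc Tdef by auto
        have e: "cinner (v i) (M *v v j) = (if i \<in> R \<and> j \<in> R then cinner (v i) (A *v v j) else 0)" for i j
          unfolding A(2) by (rule compr_entry[OF Q0p Q0v])
        have "M ** QY - QY ** M = 0"
        proof (rule onb_zero[OF onb])
          fix i j
          have "cinner (v i) ((M ** QY - QY ** M) *v v j) =
              cinner (v i) (M *v (QY *v v j)) - cinner (QY *v v i) (M *v v j)"
            by (simp add: matrix_vector_mult_diff_rdistrib cinner_diff_right matrix_vector_mul_assoc[symmetric]
                cinner_proj_r[OF QYp])
          also have "\<dots> = 0"
            using key1[OF A(1), of i j] key2[OF A(1), of j i] YR by (auto simp: QYv e)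
          finally show "cinner (v i) ((M ** QY - QY ** M) *v v j) = 0" .
        qed
        then show ?thesis by simp
      qed
      have "\<not> qconnected_in Q0 (compression P S)"
      proof
        assume "qconnected_in Q0 (compression P S)"
        then obtain m where m: "m \<ge> 1" "qpow (compression P S) m = corner Q0"
          by (auto simp: qconnected_in_def)
        define N where "N = outer (v x) (v y)"
        have "N \<in> corner Q0" unfolding corner_iff[OF QQ] N_def
          using xy by (simp add: mat_mult_outer outer_mult_mat Qa Q0v)
        then have "N ** QY = QY ** N" using qpow_in_comm[OF comm m(1)] m(2) by auto
        moreover have "N ** QY = 0" using xy
          by (simp add: N_def outer_mult_mat QYa QYv Y_def)
        moreover have "QY ** N = N" using xy by (simp add: N_def mat_mult_outer QYv Y_def)
        moreover have "N \<noteq> 0" using onb_ne0[OF onb] by (simp add: N_def outer_eq_0)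
        ultimately show False by simp
      qed
      then show ?thesis using Pp by (simp add: q_separator_def Q0_def)
    qed
  qed
  then show ?thesis using qk rk by (auto simp: q_k_connected_def)
qed




lemma proj0: "is_projection (0::'n::finite cmat)" by (simp add: is_projection_def)

lemma dir2:
  fixes S :: "'n::finite cmat set"
  assumes qg: "quantum_graph S" and H: "\<forall>v. orthonormal_basis v \<longrightarrow> c_k_connected (Cv v S) k"
    and sepP: "q_separator S P"
  shows "k \<le> rank P"
proof (rule ccontr)
  assume lt: "\<not> k \<le> rank P"
  have Pp: "is_projection P" using sepP by (simp add: q_separator_def)
  define Q0 where "Q0 = mat 1 - P"
  define T where "T = compression P S"
  have qs: "qsetting T Q0" unfolding T_def Q0_def by (rule comp_qsetting[OF qg Pp])
  have Q0p: "is_projection Q0" unfolding Q0_def by (rule proj_compl[OF Pp])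
  have QQ: "Q0 ** Q0 = Q0" and Qa: "mat_adj Q0 = Q0" using Q0p by (auto simp: is_projection_def)
  have Tdef: "T = {Q0 ** A ** Q0 | A. A \<in> S}" by (simp add: T_def compression_def Q0_def)
  have S: "csubspace S" "\<And>A. A \<in> S \<Longrightarrow> mat_adj A \<in> S" "mat 1 \<in> S"
    using qg by (auto simp: quantum_graph_def)
  have suff: False if onb: "orthonormal_basis v" and PX: "\<And>i. i \<in> X \<Longrightarrow> P *v v i = v i"
      "\<And>i. i \<notin> X \<Longrightarrow> P *v v i = 0" and cs: "c_separator (Cv v S) X" for v X
  proof -
    have "P = (\<Sum>i\<in>X. outer (v i) (v i))" by (rule proj_decomp[OF onb PX])
    then have "rank P = card X" by (simp add: rank_pr[OF onb])
    moreover have "k \<le> card X" using H onb cs by (auto simp: c_k_connected_def)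
    ultimately show False using lt by simp
  qed
  have Q0v: "Q0 *v v j = (if j \<in> UNIV - X then v j else 0)"
    if "\<And>i. i \<in> X \<Longrightarrow> P *v v i = v i" "\<And>i. i \<notin> X \<Longrightarrow> P *v v i = 0" for v X j
    using that by (simp add: Q0_def matrix_vector_mult_diff_rdistrib)
  have "\<not> qconnected_in Q0 T \<or> one_dim T" using sepP by (simp add: q_separator_def Q0_def T_def)
  then show False
  proof
    assume "one_dim T"
    then obtain A0 where A0: "A0 \<noteq> 0" "T = {cscale c A0 | c. True}" by (auto simp: one_dim_def)
    obtain v X Y where vX: "orthonormal_basis v" "\<forall>i. (i \<in> X \<longrightarrow> P *v v i = v i) \<and> (i \<notin> X \<longrightarrow> P *v v i = 0)"
      using onb_adapted[OF Pp proj0] by auto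
    define R where "R = UNIV - X"
    have Q0v': "Q0 *v v j = (if j \<in> R then v j else 0)" for j
      unfolding R_def by (rule Q0v) (use vX in auto)
    have "Q0 \<in> T" using qsetting.Q0T[OF qs] .
    then obtain c0 where c0: "Q0 = cscale c0 A0" using A0 by auto
    have Q0nz: "Q0 \<noteq> 0"
    proof
      assume "Q0 = 0"
      have "A0 \<in> T" using A0(2) by (auto intro: exI[of _ 1])
      then obtain A where "A0 = Q0 ** A ** Q0" using Tdef by auto
      with \<open>Q0 = 0\<close> A0(1) show False by simp
    qed
    then have c0nz: "c0 \<noteq> 0" using c0 by auto
    have Tmul: "\<exists>d. M = cscale d Q0" if MT: "M \<in> T" for M
    proof -
      obtain c where "M = cscale c A0" using MT A0(2) by auto
      then have "M = cscale (c / c0) Q0" using c0 c0nz by (simp add: cscale_cscale)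
      then show ?thesis by blast
    qed
    have Rne: "R \<noteq> {}"
    proof
      assume "R = {}"
      then have "Q0 = 0" by (intro onb_zero[OF vX(1)]) (simp add: Q0v')
      with Q0nz show False by simp
    qed
    have "c_separator (Cv v S) X"
    proof (cases "card R = 1")
      case True then show ?thesis by (simp add: c_separator_def R_def)
    next
      case False
      obtain i where i: "i \<in> R" using Rne by blast
      have "R - {i} \<noteq> {}"
      proof
        assume "R - {i} = {}"
        then have "R = {i}" using i by blast
        with False show False by simp
      qed
      then obtain j where j: "j \<in> R" "j \<noteq> i" by blast
      have noedge: "\<not> Cv v S a b" if "a \<in> R" "b \<in> R" for a b
      proof
        assume "Cv v S a b"
        then obtain A where A: "A \<in> S" "a \<noteq> b" "cinner (v a) (A *v v b) \<noteq> 0" by (auto simp: Cv_def)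
        have MT: "Q0 ** A ** Q0 \<in> T" using A(1) Tdef by blast
        then obtain d where d: "Q0 ** A ** Q0 = cscale d Q0" using Tmul by blast
        have "cinner (v a) (A *v v b) = cinner (v a) ((Q0 ** A ** Q0) *v v b)"
          using compr_entry[OF Q0p Q0v', of a A b] that by simp
        also have "\<dots> = d * cinner (v a) (v b)" using that
          by (simp add: d cscale_mv cinner_scale_right Q0v')
        also have "\<dots> = 0" using A(2) by (simp add: onb_cinner[OF vX(1)])
        finally show False using A(3) by simp
      qed
      have E0: "{(a, b). a \<in> R \<and> b \<in> R \<and> Cv v S a b} = {}" using noedge by auto
      have "(i, j) \<notin> {(a, b). a \<in> R \<and> b \<in> R \<and> Cv v S a b}\<^sup>*"
        unfolding E0 rtrancl_empty using j(2) by simp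
      then have "\<not> graph_connected_on (Cv v S) R" unfolding graph_connected_on_def using i j by blast
      then show ?thesis by (simp add: c_separator_def R_def)
    qed
    then show False using suff vX by blast
  next
    assume "\<not> qconnected_in Q0 T"
    from disc_Q[OF qs this] obtain Q where Q: "is_projection Q" "Q ** Q0 = Q" "Q \<noteq> 0" "Q \<noteq> Q0"
      "\<forall>M\<in>T. Q ** M = M ** Q" by blast
    have Qa': "mat_adj Q = Q" using Q(1) by (simp add: is_projection_def)
    have Q0Q: "Q0 ** Q = Q"
    proof -
      have "mat_adj (Q ** Q0) = mat_adj Q" using Q(2) by simp
      then show ?thesis by (simp add: adj_mult Qa Qa')
    qed
    have PQ0: "P ** Q0 = 0" using Pp by (simp add: Q0_def mm_diff_l is_projection_def)
    have PQ: "P ** Q = 0"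
    proof -
      have "P ** Q = P ** (Q0 ** Q)" using Q0Q by simp
      also have "\<dots> = (P ** Q0) ** Q" by (simp add: matrix_mul_assoc)
      finally show ?thesis using PQ0 by simp
    qed
    obtain v X Y where vX: "orthonormal_basis v" "X \<inter> Y = {}"
      "\<forall>i. (i \<in> X \<longrightarrow> P *v v i = v i) \<and> (i \<notin> X \<longrightarrow> P *v v i = 0) \<and>
         (i \<in> Y \<longrightarrow> Q *v v i = v i) \<and> (i \<notin> Y \<longrightarrow> Q *v v i = 0)"
      using onb_adapted[OF Pp Q(1) PQ] by blast
    define R where "R = UNIV - X"
    have Q0v': "Q0 *v v j = (if j \<in> R then v j else 0)" for j
      unfolding R_def by (rule Q0v) (use vX in auto)
    have Qv: "Q *v v j = (if j \<in> Y then v j else 0)" for j using vX(3) by auto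
    have YR: "Y \<subseteq> R" using vX(2) by (auto simp: R_def)
    have Yne: "Y \<noteq> {}"
    proof
      assume "Y = {}"
      then have "Q = 0" by (intro onb_zero[OF vX(1)]) (simp add: Qv)
      with Q(3) show False by simp
    qed
    have Zne: "R - Y \<noteq> {}"
    proof
      assume RY: "R - Y = {}"
      have "Q0 - Q = 0"
      proof (rule onb_zero[OF vX(1)])
        fix i j
        have "(Q0 - Q) *v v j = 0"
          using RY YR by (auto simp: matrix_vector_mult_diff_rdistrib Q0v' Qv)
        then show "cinner (v i) ((Q0 - Q) *v v j) = 0" by simp
      qed
      with Q(4) show False by simp
    qed
    obtain y where y: "y \<in> Y" using Yne by blast
    obtain z where z: "z \<in> R" "z \<notin> Y" using Zne by blast
    define E where "E = {(a, b). a \<in> R \<and> b \<in> R \<and> Cv v S a b}"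
    have stepY: "c \<in> Y" if "(b, c) \<in> E" "b \<in> Y" for b c
    proof (rule ccontr)
      assume cY: "c \<notin> Y"
      from that obtain A where A: "A \<in> S" "cinner (v b) (A *v v c) \<noteq> 0" "b \<in> R" "c \<in> R"
        by (auto simp: E_def Cv_def)
      define M where "M = Q0 ** A ** Q0"
      have MT: "M \<in> T" using A(1) Tdef M_def by blast
      have "cinner (v b) (A *v v c) = cinner (v b) (M *v v c)"
        using compr_entry[OF Q0p Q0v', of b A c] A(3,4) by (simp add: M_def)
      also have "\<dots> = cinner (Q *v v b) (M *v v c)" using that(2) by (simp add: Qv)
      also have "\<dots> = cinner (v b) ((Q ** M) *v v c)"
        by (simp add: cinner_proj_r[OF Q(1), symmetric] matrix_vector_mul_assoc)
      also have "\<dots> = cinner (v b) ((M ** Q) *v v c)" using Q(5) MT by simp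
      also have "\<dots> = 0" using cY by (simp add: matrix_vector_mul_assoc[symmetric] Qv)
      finally show False using A(2) by simp
    qed
    have reach: "b \<in> Y" if "(y, b) \<in> E\<^sup>*" for b
      using that
    proof (induct rule: rtrancl_induct)
      case base then show ?case by (rule y)
    next
      case (step b c) then show ?case using stepY by blast
    qed
    have "(y, z) \<notin> E\<^sup>*" using reach z(2) by blast
    then have "\<not> graph_connected_on (Cv v S) R"
      unfolding graph_connected_on_def E_def[symmetric] using y YR z(1) by blast
    then have "c_separator (Cv v S) X" by (simp add: c_separator_def R_def)
    then show False using suff vX by blast
  qed
qed

theorem proposition4p5:
  fixes S :: "'n::finite cmat set" and k :: nat
  assumes "quantum_graph S"
  shows "q_k_connected S k \<longleftrightarrow> (\<forall>v. orthonormal_basis v \<longrightarrow> c_k_connected (Cv v S) k)"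
proof
  assume "q_k_connected S k"
  then show "\<forall>v. orthonormal_basis v \<longrightarrow> c_k_connected (Cv v S) k"
    using dir1[OF assms] by (auto simp: c_k_connected_def)
next
  assume "\<forall>v. orthonormal_basis v \<longrightarrow> c_k_connected (Cv v S) k"
  then show "q_k_connected S k"
    using dir2[OF assms] by (auto simp: q_k_connected_def)
qed



end
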